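(* Let $\mathbb C$ be a homological category with finite colimits, and let $x\colon X\to A$, $y\colon Y\to A$ be morphisms whose images are normal monomorphisms. Then the morphism $\gamma_1=\gamma_{1_A}\colon (A+X)\times_A(A+Y)\to A_3$ is a normal epimorphism.
   Context: A homological category is a regular pointed category in which the Split Short Five Lemma holds; the image of a morphism is the monomorphism part of its (regular epi, mono) factorization; a normal monomorphism is a kernel of some morphism and a normal epimorphism a cokernel of some morphism. Notation: $\iota_i$ coproduct injections, $[a,b]$ copairing, $\langle a,b,c\rangle$ pairing into a limit. $(A+X)\times_A(A+Y)$ is the pullback of $[1,0]\colon A+X\to A$ and $[1,0]\colon A+Y\to A$, with projections $\pi_1,\pi_2$. $A_3=A\times_{A/X}A\times_{A/Y}A$ is the limit of $A\xrightarrow{\mathsf{coker}(x)}A/X\xleftarrow{\mathsf{coker}(x)}A\xrightarrow{\mathsf{coker}(y)}A/Y\xleftarrow{\mathsf{coker}(y)}A$, and $\gamma_1=\langle [1,x]\pi_1,[1,0]\pi_1,[1,y]\pi_2\rangle$. *)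

theory Defs
  imports Main
begin

text \<open>A (small) category given by explicit data: objects, arrows, domain, codomain,
  identities and composition.  Comp C g f denotes the composite g after f.\<close>

record ('o, 'm) category_data =
  Obj  :: "'o set"
  Arr  :: "'m set"
  Dom  :: "'m \<Rightarrow> 'o"
  Cod  :: "'m \<Rightarrow> 'o"
  Idt  :: "'o \<Rightarrow> 'm"
  Comp :: "'m \<Rightarrow> 'm \<Rightarrow> 'm"

definition hom :: "('o, 'm) category_data \<Rightarrow> 'o \<Rightarrow> 'o \<Rightarrow> 'm set" where
  "hom C a b = {f \<in> Arr C. Dom C f = a \<and> Cod C f = b}"

definition category :: "('o, 'm) category_data \<Rightarrow> bool" where
  "category C \<longleftrightarrow>
     (\<forall>f \<in> Arr C. Dom C f \<in> Obj C \<and> Cod C f \<in> Obj C) \<and>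
     (\<forall>a \<in> Obj C. Idt C a \<in> hom C a a) \<and>
     (\<forall>f \<in> Arr C. \<forall>g \<in> Arr C. Cod C f = Dom C g \<longrightarrow>
         Comp C g f \<in> hom C (Dom C f) (Cod C g)) \<and>
     (\<forall>f \<in> Arr C. Comp C f (Idt C (Dom C f)) = f \<and> Comp C (Idt C (Cod C f)) f = f) \<and>
     (\<forall>f \<in> Arr C. \<forall>g \<in> Arr C. \<forall>h \<in> Arr C. Cod C f = Dom C g \<longrightarrow> Cod C g = Dom C h \<longrightarrow>
         Comp C h (Comp C g f) = Comp C (Comp C h g) f)"

definition mono :: "('o, 'm) category_data \<Rightarrow> 'm \<Rightarrow> bool" where
  "mono C m \<longleftrightarrow> m \<in> Arr C \<and>
     (\<forall>f \<in> Arr C. \<forall>g \<in> Arr C. Dom C f = Dom C g \<longrightarrow> Cod C f = Dom C m \<longrightarrow>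
        Cod C g = Dom C m \<longrightarrow> Comp C m f = Comp C m g \<longrightarrow> f = g)"

definition iso :: "('o, 'm) category_data \<Rightarrow> 'm \<Rightarrow> bool" where
  "iso C f \<longleftrightarrow> f \<in> Arr C \<and>
     (\<exists>g \<in> hom C (Cod C f) (Dom C f).
        Comp C g f = Idt C (Dom C f) \<and> Comp C f g = Idt C (Cod C f))"

definition initial :: "('o, 'm) category_data \<Rightarrow> 'o \<Rightarrow> bool" where
  "initial C i \<longleftrightarrow> i \<in> Obj C \<and> (\<forall>a \<in> Obj C. \<exists>!f. f \<in> hom C i a)"

definition terminal :: "('o, 'm) category_data \<Rightarrow> 'o \<Rightarrow> bool" where
  "terminal C t \<longleftrightarrow> t \<in> Obj C \<and> (\<forall>a \<in> Obj C. \<exists>!f. f \<in> hom C a t)"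

definition zero_obj :: "('o, 'm) category_data \<Rightarrow> 'o \<Rightarrow> bool" where
  "zero_obj C z \<longleftrightarrow> initial C z \<and> terminal C z"

definition pointed :: "('o, 'm) category_data \<Rightarrow> bool" where
  "pointed C \<longleftrightarrow> (\<exists>z. zero_obj C z)"

definition zero_arr :: "('o, 'm) category_data \<Rightarrow> 'm \<Rightarrow> bool" where
  "zero_arr C f \<longleftrightarrow> f \<in> Arr C \<and>
     (\<exists>z g h. zero_obj C z \<and> g \<in> hom C (Dom C f) z \<and> h \<in> hom C z (Cod C f) \<and> f = Comp C h g)"

definition is_kernel :: "('o, 'm) category_data \<Rightarrow> 'm \<Rightarrow> 'm \<Rightarrow> bool" where
  "is_kernel C k f \<longleftrightarrow> f \<in> Arr C \<and> k \<in> Arr C \<and> Cod C k = Dom C f \<and>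
     zero_arr C (Comp C f k) \<and>
     (\<forall>g \<in> Arr C. Cod C g = Dom C f \<longrightarrow> zero_arr C (Comp C f g) \<longrightarrow>
        (\<exists>!h. h \<in> hom C (Dom C g) (Dom C k) \<and> Comp C k h = g))"

definition is_cokernel :: "('o, 'm) category_data \<Rightarrow> 'm \<Rightarrow> 'm \<Rightarrow> bool" where
  "is_cokernel C q f \<longleftrightarrow> f \<in> Arr C \<and> q \<in> Arr C \<and> Dom C q = Cod C f \<and>
     zero_arr C (Comp C q f) \<and>
     (\<forall>g \<in> Arr C. Dom C g = Cod C f \<longrightarrow> zero_arr C (Comp C g f) \<longrightarrow>
        (\<exists>!h. h \<in> hom C (Cod C q) (Cod C g) \<and> Comp C h q = g))"

definition normal_mono :: "('o, 'm) category_data \<Rightarrow> 'm \<Rightarrow> bool" where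
  "normal_mono C m \<longleftrightarrow> (\<exists>f. is_kernel C m f)"

definition normal_epi :: "('o, 'm) category_data \<Rightarrow> 'm \<Rightarrow> bool" where
  "normal_epi C e \<longleftrightarrow> (\<exists>f. is_cokernel C e f)"

definition is_pullback :: "('o, 'm) category_data \<Rightarrow> 'm \<Rightarrow> 'm \<Rightarrow> 'm \<Rightarrow> 'm \<Rightarrow> bool" where
  "is_pullback C f g p1 p2 \<longleftrightarrow>
     f \<in> Arr C \<and> g \<in> Arr C \<and> Cod C f = Cod C g \<and>
     p1 \<in> Arr C \<and> p2 \<in> Arr C \<and> Dom C p1 = Dom C p2 \<and>
     Cod C p1 = Dom C f \<and> Cod C p2 = Dom C g \<and> Comp C f p1 = Comp C g p2 \<and>
     (\<forall>q1 \<in> Arr C. \<forall>q2 \<in> Arr C. Dom C q1 = Dom C q2 \<longrightarrow> Cod C q1 = Dom C f \<longrightarrow>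
        Cod C q2 = Dom C g \<longrightarrow> Comp C f q1 = Comp C g q2 \<longrightarrow>
        (\<exists>!h. h \<in> hom C (Dom C q1) (Dom C p1) \<and> Comp C p1 h = q1 \<and> Comp C p2 h = q2))"

definition is_pushout :: "('o, 'm) category_data \<Rightarrow> 'm \<Rightarrow> 'm \<Rightarrow> 'm \<Rightarrow> 'm \<Rightarrow> bool" where
  "is_pushout C f g p1 p2 \<longleftrightarrow>
     f \<in> Arr C \<and> g \<in> Arr C \<and> Dom C f = Dom C g \<and>
     p1 \<in> Arr C \<and> p2 \<in> Arr C \<and> Cod C p1 = Cod C p2 \<and>
     Dom C p1 = Cod C f \<and> Dom C p2 = Cod C g \<and> Comp C p1 f = Comp C p2 g \<and>
     (\<forall>q1 \<in> Arr C. \<forall>q2 \<in> Arr C. Cod C q1 = Cod C q2 \<longrightarrow> Dom C q1 = Cod C f \<longrightarrow>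
        Dom C q2 = Cod C g \<longrightarrow> Comp C q1 f = Comp C q2 g \<longrightarrow>
        (\<exists>!h. h \<in> hom C (Cod C p1) (Cod C q1) \<and> Comp C h p1 = q1 \<and> Comp C h p2 = q2))"

definition is_coequalizer :: "('o, 'm) category_data \<Rightarrow> 'm \<Rightarrow> 'm \<Rightarrow> 'm \<Rightarrow> bool" where
  "is_coequalizer C e f g \<longleftrightarrow>
     f \<in> Arr C \<and> g \<in> Arr C \<and> Dom C f = Dom C g \<and> Cod C f = Cod C g \<and>
     e \<in> Arr C \<and> Dom C e = Cod C f \<and> Comp C e f = Comp C e g \<and>
     (\<forall>h \<in> Arr C. Dom C h = Cod C f \<longrightarrow> Comp C h f = Comp C h g \<longrightarrow>
        (\<exists>!u. u \<in> hom C (Cod C e) (Cod C h) \<and> Comp C u e = h))"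

definition regular_epi :: "('o, 'm) category_data \<Rightarrow> 'm \<Rightarrow> bool" where
  "regular_epi C e \<longleftrightarrow> (\<exists>f g. is_coequalizer C e f g)"

definition finitely_complete :: "('o, 'm) category_data \<Rightarrow> bool" where
  "finitely_complete C \<longleftrightarrow> (\<exists>t. terminal C t) \<and>
     (\<forall>f \<in> Arr C. \<forall>g \<in> Arr C. Cod C f = Cod C g \<longrightarrow> (\<exists>p1 p2. is_pullback C f g p1 p2))"

definition finitely_cocomplete :: "('o, 'm) category_data \<Rightarrow> bool" where
  "finitely_cocomplete C \<longleftrightarrow> (\<exists>i. initial C i) \<and>
     (\<forall>f \<in> Arr C. \<forall>g \<in> Arr C. Dom C f = Dom C g \<longrightarrow> (\<exists>p1 p2. is_pushout C f g p1 p2))"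

definition regular_category :: "('o, 'm) category_data \<Rightarrow> bool" where
  "regular_category C \<longleftrightarrow> category C \<and> finitely_complete C \<and>
     (\<forall>f \<in> Arr C. \<exists>e m. regular_epi C e \<and> mono C m \<and> Cod C e = Dom C m \<and> f = Comp C m e) \<and>
     (\<forall>e f p1 p2. regular_epi C e \<longrightarrow> is_pullback C e f p1 p2 \<longrightarrow> regular_epi C p2)"

definition split_short_five_lemma :: "('o, 'm) category_data \<Rightarrow> bool" where
  "split_short_five_lemma C \<longleftrightarrow>
     (\<forall>p s k p' s' k' u v w.
        p \<in> Arr C \<longrightarrow> s \<in> hom C (Cod C p) (Dom C p) \<longrightarrow> Comp C p s = Idt C (Cod C p) \<longrightarrow>
        is_kernel C k p \<longrightarrow>
        p' \<in> Arr C \<longrightarrow> s' \<in> hom C (Cod C p') (Dom C p') \<longrightarrow> Comp C p' s' = Idt C (Cod C p') \<longrightarrow>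
        is_kernel C k' p' \<longrightarrow>
        u \<in> hom C (Dom C k) (Dom C k') \<longrightarrow> v \<in> hom C (Dom C p) (Dom C p') \<longrightarrow>
        w \<in> hom C (Cod C p) (Cod C p') \<longrightarrow>
        Comp C v k = Comp C k' u \<longrightarrow> Comp C p' v = Comp C w p \<longrightarrow> Comp C v s = Comp C s' w \<longrightarrow>
        iso C u \<longrightarrow> iso C w \<longrightarrow> iso C v)"

definition homological :: "('o, 'm) category_data \<Rightarrow> bool" where
  "homological C \<longleftrightarrow> regular_category C \<and> pointed C \<and> split_short_five_lemma C"

definition image_is_normal_mono :: "('o, 'm) category_data \<Rightarrow> 'm \<Rightarrow> bool" where
  "image_is_normal_mono C f \<longleftrightarrow>
     (\<exists>e m. regular_epi C e \<and> mono C m \<and> normal_mono C m \<and> Cod C e = Dom C m \<and> f = Comp C m e)"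

definition is_coproduct :: "('o, 'm) category_data \<Rightarrow> 'o \<Rightarrow> 'o \<Rightarrow> 'o \<Rightarrow> 'm \<Rightarrow> 'm \<Rightarrow> bool" where
  "is_coproduct C a b s i1 i2 \<longleftrightarrow> i1 \<in> hom C a s \<and> i2 \<in> hom C b s \<and>
     (\<forall>c f g. f \<in> hom C a c \<longrightarrow> g \<in> hom C b c \<longrightarrow>
        (\<exists>!h. h \<in> hom C s c \<and> Comp C h i1 = f \<and> Comp C h i2 = g))"

text \<open>Limit L (with projections l1 l2 l3) of the diagram
  A --qx--> A/X <--qx-- A --qy--> A/Y <--qy-- A.\<close>
definition is_A3_limit :: "('o, 'm) category_data \<Rightarrow> 'm \<Rightarrow> 'm \<Rightarrow> 'o \<Rightarrow> 'm \<Rightarrow> 'm \<Rightarrow> 'm \<Rightarrow> bool" where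
  "is_A3_limit C qx qy L l1 l2 l3 \<longleftrightarrow>
     qx \<in> Arr C \<and> qy \<in> Arr C \<and> Dom C qx = Dom C qy \<and>
     l1 \<in> hom C L (Dom C qx) \<and> l2 \<in> hom C L (Dom C qx) \<and> l3 \<in> hom C L (Dom C qx) \<and>
     Comp C qx l1 = Comp C qx l2 \<and> Comp C qy l2 = Comp C qy l3 \<and>
     (\<forall>T m1 m2 m3. m1 \<in> hom C T (Dom C qx) \<longrightarrow> m2 \<in> hom C T (Dom C qx) \<longrightarrow>
        m3 \<in> hom C T (Dom C qx) \<longrightarrow>
        Comp C qx m1 = Comp C qx m2 \<longrightarrow> Comp C qy m2 = Comp C qy m3 \<longrightarrow>
        (\<exists>!h. h \<in> hom C T L \<and> Comp C l1 h = m1 \<and> Comp C l2 h = m2 \<and> Comp C l3 h = m3))"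

end

theory Submission
  imports Defs
begin


locale cat =
  fixes C :: "('o,'m) category_data"
  assumes cat: "category C"
begin

abbreviation cmp (infixr "\<cdot>" 55) where "g \<cdot> f \<equiv> Comp C g f"

lemma dom_obj: "f \<in> Arr C \<Longrightarrow> Dom C f \<in> Obj C"
  using cat unfolding category_def by blast
lemma cod_obj: "f \<in> Arr C \<Longrightarrow> Cod C f \<in> Obj C"
  using cat unfolding category_def by blast
lemma comp_arr[simp]: "\<lbrakk>f \<in> Arr C; g \<in> Arr C; Cod C f = Dom C g\<rbrakk> \<Longrightarrow> g \<cdot> f \<in> Arr C"
  using cat unfolding category_def hom_def by blast
lemma dom_comp[simp]: "\<lbrakk>f \<in> Arr C; g \<in> Arr C; Cod C f = Dom C g\<rbrakk> \<Longrightarrow> Dom C (g \<cdot> f) = Dom C f"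
  using cat unfolding category_def hom_def by blast
lemma cod_comp[simp]: "\<lbrakk>f \<in> Arr C; g \<in> Arr C; Cod C f = Dom C g\<rbrakk> \<Longrightarrow> Cod C (g \<cdot> f) = Cod C g"
  using cat unfolding category_def hom_def by blast
lemma id_arr[simp]: "a \<in> Obj C \<Longrightarrow> Idt C a \<in> Arr C"
  using cat unfolding category_def hom_def by blast
lemma dom_id[simp]: "a \<in> Obj C \<Longrightarrow> Dom C (Idt C a) = a"
  using cat unfolding category_def hom_def by blast
lemma cod_id[simp]: "a \<in> Obj C \<Longrightarrow> Cod C (Idt C a) = a"
  using cat unfolding category_def hom_def by blast
lemma comp_idr[simp]: "f \<in> Arr C \<Longrightarrow> Dom C f = a \<Longrightarrow> f \<cdot> Idt C a = f"
  using cat unfolding category_def hom_def by blast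
lemma comp_idl[simp]: "f \<in> Arr C \<Longrightarrow> Cod C f = a \<Longrightarrow> Idt C a \<cdot> f = f"
  using cat unfolding category_def hom_def by blast
lemma assoc: "\<lbrakk>f \<in> Arr C; g \<in> Arr C; h \<in> Arr C; Cod C f = Dom C g; Cod C g = Dom C h\<rbrakk>
   \<Longrightarrow> (h \<cdot> g) \<cdot> f = h \<cdot> (g \<cdot> f)"
  using cat unfolding category_def hom_def by metis

lemma mono_cancel: "mono C m \<Longrightarrow> f \<in> Arr C \<Longrightarrow> g \<in> Arr C \<Longrightarrow> Dom C f = Dom C g \<Longrightarrow>
   Cod C f = Dom C m \<Longrightarrow> Cod C g = Dom C m \<Longrightarrow> m \<cdot> f = m \<cdot> g \<Longrightarrow> f = g"
  unfolding mono_def by blast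

lemma isoE:
  assumes "iso C f"
  obtains g where "g \<in> Arr C" "Dom C g = Cod C f" "Cod C g = Dom C f"
    "g \<cdot> f = Idt C (Dom C f)" "f \<cdot> g = Idt C (Cod C f)"
  using assms unfolding iso_def hom_def by blast

lemma iso_arr: "iso C f \<Longrightarrow> f \<in> Arr C" unfolding iso_def by blast

lemma id_iso: "a \<in> Obj C \<Longrightarrow> iso C (Idt C a)"
  unfolding iso_def hom_def by (rule conjI, simp, rule bexI[of _ "Idt C a"], auto)

end

locale pcat = cat +
  fixes z assumes zo: "zero_obj C z"
begin

definition ter where "ter a = (THE f. f \<in> hom C a z)"
definition ini where "ini b = (THE f. f \<in> hom C z b)"
definition zero where "zero a b = ini b \<cdot> ter a"

lemma z_obj[simp]: "z \<in> Obj C" using zo unfolding zero_obj_def initial_def by blast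

lemma ter: "a \<in> Obj C \<Longrightarrow> ter a \<in> Arr C \<and> Dom C (ter a) = a \<and> Cod C (ter a) = z"
proof -
  assume a: "a \<in> Obj C"
  then have "\<exists>!f. f \<in> hom C a z" using zo unfolding zero_obj_def terminal_def by blast
  then have "ter a \<in> hom C a z" unfolding ter_def by (rule theI')
  then show ?thesis unfolding hom_def by blast
qed
lemma ter_uniq: "f \<in> Arr C \<Longrightarrow> Cod C f = z \<Longrightarrow> f = ter (Dom C f)"
proof -
  assume f: "f \<in> Arr C" "Cod C f = z"
  then have "\<exists>!f'. f' \<in> hom C (Dom C f) z" using zo dom_obj unfolding zero_obj_def terminal_def by blast
  moreover have "f \<in> hom C (Dom C f) z" using f unfolding hom_def by blast
  ultimately show ?thesis unfolding ter_def by (metis the_equality)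
qed
lemma ini: "b \<in> Obj C \<Longrightarrow> ini b \<in> Arr C \<and> Dom C (ini b) = z \<and> Cod C (ini b) = b"
proof -
  assume a: "b \<in> Obj C"
  then have "\<exists>!f. f \<in> hom C z b" using zo unfolding zero_obj_def initial_def by blast
  then have "ini b \<in> hom C z b" unfolding ini_def by (rule theI')
  then show ?thesis unfolding hom_def by blast
qed
lemma ini_uniq: "f \<in> Arr C \<Longrightarrow> Dom C f = z \<Longrightarrow> f = ini (Cod C f)"
proof -
  assume f: "f \<in> Arr C" "Dom C f = z"
  then have "\<exists>!f'. f' \<in> hom C z (Cod C f)" using zo cod_obj unfolding zero_obj_def initial_def by blast
  moreover have "f \<in> hom C z (Cod C f)" using f unfolding hom_def by blast
  ultimately show ?thesis unfolding ini_def by (metis the_equality)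
qed

lemma zero_in[simp]: "a \<in> Obj C \<Longrightarrow> b \<in> Obj C \<Longrightarrow> zero a b \<in> Arr C"
  and dom_zero[simp]: "a \<in> Obj C \<Longrightarrow> b \<in> Obj C \<Longrightarrow> Dom C (zero a b) = a"
  and cod_zero[simp]: "a \<in> Obj C \<Longrightarrow> b \<in> Obj C \<Longrightarrow> Cod C (zero a b) = b"
  unfolding zero_def using ter ini by auto

lemma zero_arr_iff: "f \<in> Arr C \<Longrightarrow> zero_arr C f \<longleftrightarrow> f = zero (Dom C f) (Cod C f)"
proof
  assume f: "f \<in> Arr C" and "zero_arr C f"
  then obtain z' g h where z': "zero_obj C z'" and g: "g \<in> hom C (Dom C f) z'"
    and h: "h \<in> hom C z' (Cod C f)" and fe: "f = h \<cdot> g" unfolding zero_arr_def by blast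
  have z'o: "z' \<in> Obj C" using z' unfolding zero_obj_def initial_def by blast
  obtain \<phi> where \<phi>: "\<phi> \<in> hom C z z'" using zo z'o unfolding zero_obj_def initial_def by blast
  have ao: "Dom C f \<in> Obj C" "Cod C f \<in> Obj C" using f dom_obj cod_obj by auto
  have g': "g = \<phi> \<cdot> ter (Dom C f)"
  proof -
    have "\<exists>!f'. f' \<in> hom C (Dom C f) z'" using z' ao unfolding zero_obj_def terminal_def by blast
    moreover have "\<phi> \<cdot> ter (Dom C f) \<in> hom C (Dom C f) z'" using \<phi> ter[OF ao(1)] unfolding hom_def by auto
    ultimately show ?thesis using g by blast
  qed
  have h': "h \<cdot> \<phi> = ini (Cod C f)"
    using ini_uniq[of "h \<cdot> \<phi>"] \<phi> h unfolding hom_def by auto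
  have "f = (h \<cdot> \<phi>) \<cdot> ter (Dom C f)"
    using fe g' assoc[of "ter (Dom C f)" \<phi> h] \<phi> h ter[OF ao(1)] unfolding hom_def by auto
  then show "f = zero (Dom C f) (Cod C f)" unfolding zero_def h' .
next
  assume f: "f \<in> Arr C" and e: "f = zero (Dom C f) (Cod C f)"
  have ao: "Dom C f \<in> Obj C" "Cod C f \<in> Obj C" using f dom_obj cod_obj by auto
  show "zero_arr C f" unfolding zero_arr_def
    using f zo ter[OF ao(1)] ini[OF ao(2)] e unfolding zero_def hom_def by blast
qed

lemma zero_comp_l[simp]: "g \<in> Arr C \<Longrightarrow> Dom C g = b \<Longrightarrow> a \<in> Obj C \<Longrightarrow> g \<cdot> zero a b = zero a (Cod C g)"
proof -
  assume g: "g \<in> Arr C" "Dom C g = b" and a: "a \<in> Obj C"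
  have b: "b \<in> Obj C" using g dom_obj by auto
  have "g \<cdot> ini b = ini (Cod C g)" using ini_uniq[of "g \<cdot> ini b"] ini[OF b] g by auto
  then show ?thesis unfolding zero_def using assoc[of "ter a" "ini b" g] ter[OF a] ini[OF b] g by auto
qed

lemma zero_comp_r[simp]: "f \<in> Arr C \<Longrightarrow> Cod C f = b \<Longrightarrow> c \<in> Obj C \<Longrightarrow> zero b c \<cdot> f = zero (Dom C f) c"
proof -
  assume f: "f \<in> Arr C" "Cod C f = b" and c: "c \<in> Obj C"
  have b: "b \<in> Obj C" using f cod_obj by auto
  have "ter b \<cdot> f = ter (Dom C f)" using ter_uniq[of "ter b \<cdot> f"] ter[OF b] f by auto
  then show ?thesis unfolding zero_def using assoc[of f "ter b" "ini c"] ter[OF b] ini[OF c] f by auto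
qed

end


context pcat begin

lemma ex1_uniq: "\<exists>!x. P x \<Longrightarrow> P a \<Longrightarrow> P b \<Longrightarrow> a = b" by blast

lemma zero_is_zero: "a \<in> Obj C \<Longrightarrow> b \<in> Obj C \<Longrightarrow> zero_arr C (zero a b)"
  using zero_arr_iff[of "zero a b"] by simp

lemma homI: "f \<in> Arr C \<Longrightarrow> Dom C f = a \<Longrightarrow> Cod C f = b \<Longrightarrow> f \<in> hom C a b"
  unfolding hom_def by blast
lemma homD: "f \<in> hom C a b \<Longrightarrow> f \<in> Arr C \<and> Dom C f = a \<and> Cod C f = b"
  unfolding hom_def by blast

lemma kerD: "is_kernel C k f \<Longrightarrow> k \<in> Arr C \<and> f \<in> Arr C \<and> Cod C k = Dom C f \<and> f \<cdot> k = zero (Dom C k) (Cod C f)"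
proof -
  assume a: "is_kernel C k f"
  then have "k \<in> Arr C" "f \<in> Arr C" "Cod C k = Dom C f" "zero_arr C (f \<cdot> k)" unfolding is_kernel_def by blast+
  then show ?thesis using zero_arr_iff[of "f \<cdot> k"] by simp
qed

lemma ker_univ: "is_kernel C k f \<Longrightarrow> g \<in> Arr C \<Longrightarrow> Cod C g = Dom C f \<Longrightarrow> f \<cdot> g = zero (Dom C g) (Cod C f)
  \<Longrightarrow> \<exists>!h. h \<in> hom C (Dom C g) (Dom C k) \<and> k \<cdot> h = g"
proof -
  assume a: "is_kernel C k f" "g \<in> Arr C" "Cod C g = Dom C f" "f \<cdot> g = zero (Dom C g) (Cod C f)"
  then have "zero_arr C (f \<cdot> g)" using zero_is_zero kerD dom_obj cod_obj by metis
  then show ?thesis using a unfolding is_kernel_def by blast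
qed

lemma ker_lift: "is_kernel C k f \<Longrightarrow> g \<in> Arr C \<Longrightarrow> Cod C g = Dom C f \<Longrightarrow> f \<cdot> g = zero (Dom C g) (Cod C f)
  \<Longrightarrow> \<exists>h. h \<in> Arr C \<and> Dom C h = Dom C g \<and> Cod C h = Dom C k \<and> k \<cdot> h = g"
proof -
  assume a: "is_kernel C k f" "g \<in> Arr C" "Cod C g = Dom C f" "f \<cdot> g = zero (Dom C g) (Cod C f)"
  obtain h where "h \<in> hom C (Dom C g) (Dom C k) \<and> k \<cdot> h = g" using ker_univ[OF a] by blast
  then show ?thesis using homD by blast
qed

lemma ker_mono: assumes "is_kernel C k f" shows "mono C k"
  unfolding mono_def
proof (intro conjI ballI impI)
  have K: "k \<in> Arr C" "f \<in> Arr C" "Cod C k = Dom C f" "f \<cdot> k = zero (Dom C k) (Cod C f)" using kerD[OF assms] by auto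
  show "k \<in> Arr C" using K by blast
  fix u w assume u: "u \<in> Arr C" "w \<in> Arr C" "Dom C u = Dom C w" "Cod C u = Dom C k" "Cod C w = Dom C k"
    "k \<cdot> u = k \<cdot> w"
  have o: "Dom C u \<in> Obj C" "Cod C f \<in> Obj C" using u K dom_obj cod_obj by auto
  have ku: "k \<cdot> u \<in> Arr C" "Dom C (k \<cdot> u) = Dom C u" "Cod C (k \<cdot> u) = Dom C f" using u K by auto
  have "f \<cdot> (k \<cdot> u) = (f \<cdot> k) \<cdot> u" using assoc[of u k f] K u by simp
  also have "\<dots> = zero (Dom C u) (Cod C f)" using K u o by simp
  finally have e: "\<exists>!h. h \<in> hom C (Dom C u) (Dom C k) \<and> k \<cdot> h = k \<cdot> u"
    using ker_univ[OF assms ku(1)] ku by simp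
  have hh: "u \<in> hom C (Dom C u) (Dom C k)" "w \<in> hom C (Dom C u) (Dom C k)" using u homI by auto
  show "u = w" by (rule ex1_uniq[OF e]) (use hh u(6) in auto)
qed

lemma kerI: assumes "k \<in> Arr C" "f \<in> Arr C" "Cod C k = Dom C f" "f \<cdot> k = zero (Dom C k) (Cod C f)" "mono C k"
  "\<And>g. g \<in> Arr C \<Longrightarrow> Cod C g = Dom C f \<Longrightarrow> f \<cdot> g = zero (Dom C g) (Cod C f) \<Longrightarrow>
     \<exists>h. h \<in> Arr C \<and> Dom C h = Dom C g \<and> Cod C h = Dom C k \<and> k \<cdot> h = g" shows "is_kernel C k f"
  unfolding is_kernel_def
proof (intro conjI ballI impI)
  show "zero_arr C (f \<cdot> k)" using assms zero_is_zero dom_obj cod_obj by simp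
  fix g assume g: "g \<in> Arr C" "Cod C g = Dom C f" "zero_arr C (f \<cdot> g)"
  then have "f \<cdot> g = zero (Dom C g) (Cod C f)" using zero_arr_iff[of "f \<cdot> g"] assms by simp
  then obtain h where h: "h \<in> Arr C" "Dom C h = Dom C g" "Cod C h = Dom C k" "k \<cdot> h = g" using assms(6) g by blast
  show "\<exists>!h. h \<in> hom C (Dom C g) (Dom C k) \<and> k \<cdot> h = g"
  proof (rule ex1I[of _ h])
    show "h \<in> hom C (Dom C g) (Dom C k) \<and> k \<cdot> h = g" using h homI by blast
    fix h' assume "h' \<in> hom C (Dom C g) (Dom C k) \<and> k \<cdot> h' = g"
    then show "h' = h" using h mono_cancel[OF assms(5), of h' h] homD by metis
  qed
qed (use assms in blast)+

lemma cokD: "is_cokernel C q f \<Longrightarrow> q \<in> Arr C \<and> f \<in> Arr C \<and> Dom C q = Cod C f \<and> q \<cdot> f = zero (Dom C f) (Cod C q)"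
proof -
  assume a: "is_cokernel C q f"
  then have "q \<in> Arr C" "f \<in> Arr C" "Dom C q = Cod C f" "zero_arr C (q \<cdot> f)" unfolding is_cokernel_def by blast+
  then show ?thesis using zero_arr_iff[of "q \<cdot> f"] by simp
qed

lemma cok_univ: "is_cokernel C q f \<Longrightarrow> g \<in> Arr C \<Longrightarrow> Dom C g = Cod C f \<Longrightarrow> g \<cdot> f = zero (Dom C f) (Cod C g)
  \<Longrightarrow> \<exists>!h. h \<in> hom C (Cod C q) (Cod C g) \<and> h \<cdot> q = g"
proof -
  assume a: "is_cokernel C q f" "g \<in> Arr C" "Dom C g = Cod C f" "g \<cdot> f = zero (Dom C f) (Cod C g)"
  then have "zero_arr C (g \<cdot> f)" using zero_is_zero cokD dom_obj cod_obj by metis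
  then show ?thesis using a unfolding is_cokernel_def by blast
qed

lemma cok_lift: "is_cokernel C q f \<Longrightarrow> g \<in> Arr C \<Longrightarrow> Dom C g = Cod C f \<Longrightarrow> g \<cdot> f = zero (Dom C f) (Cod C g)
  \<Longrightarrow> \<exists>h. h \<in> Arr C \<and> Dom C h = Cod C q \<and> Cod C h = Cod C g \<and> h \<cdot> q = g"
proof -
  assume a: "is_cokernel C q f" "g \<in> Arr C" "Dom C g = Cod C f" "g \<cdot> f = zero (Dom C f) (Cod C g)"
  obtain h where "h \<in> hom C (Cod C q) (Cod C g) \<and> h \<cdot> q = g" using cok_univ[OF a] by blast
  then show ?thesis using homD by blast
qed

lemma cok_epi: assumes "is_cokernel C q f" "u \<in> Arr C" "w \<in> Arr C" "Dom C u = Cod C q" "Dom C w = Cod C q"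
  "Cod C u = Cod C w" "u \<cdot> q = w \<cdot> q" shows "u = w"
proof -
  have K: "q \<in> Arr C" "f \<in> Arr C" "Dom C q = Cod C f" "q \<cdot> f = zero (Dom C f) (Cod C q)" using cokD[OF assms(1)] by auto
  have o: "Dom C f \<in> Obj C" "Cod C u \<in> Obj C" using assms K dom_obj cod_obj by auto
  have uq: "u \<cdot> q \<in> Arr C" "Dom C (u \<cdot> q) = Cod C f" "Cod C (u \<cdot> q) = Cod C u" using assms K by auto
  have "(u \<cdot> q) \<cdot> f = u \<cdot> (q \<cdot> f)" using assoc[of f q u] K assms by simp
  also have "\<dots> = zero (Dom C f) (Cod C u)" using K assms o by simp
  finally have e: "\<exists>!h. h \<in> hom C (Cod C q) (Cod C u) \<and> h \<cdot> q = u \<cdot> q"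
    using cok_univ[OF assms(1) uq(1)] uq by simp
  have hh: "u \<in> hom C (Cod C q) (Cod C u)" "w \<in> hom C (Cod C q) (Cod C u)" using assms homI by auto
  show "u = w" by (rule ex1_uniq[OF e]) (use hh assms(7) in auto)
qed

lemma cokI: assumes "q \<in> Arr C" "f \<in> Arr C" "Dom C q = Cod C f" "q \<cdot> f = zero (Dom C f) (Cod C q)"
  "\<And>u w. u \<in> Arr C \<Longrightarrow> w \<in> Arr C \<Longrightarrow> Dom C u = Cod C q \<Longrightarrow> Dom C w = Cod C q \<Longrightarrow> Cod C u = Cod C w \<Longrightarrow> u \<cdot> q = w \<cdot> q \<Longrightarrow> u = w"
  "\<And>g. g \<in> Arr C \<Longrightarrow> Dom C g = Cod C f \<Longrightarrow> g \<cdot> f = zero (Dom C f) (Cod C g) \<Longrightarrow>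
     \<exists>h. h \<in> Arr C \<and> Dom C h = Cod C q \<and> Cod C h = Cod C g \<and> h \<cdot> q = g" shows "is_cokernel C q f"
  unfolding is_cokernel_def
proof (intro conjI ballI impI)
  show "zero_arr C (q \<cdot> f)" using assms(1-4) zero_is_zero dom_obj cod_obj by simp
  fix g assume g: "g \<in> Arr C" "Dom C g = Cod C f" "zero_arr C (g \<cdot> f)"
  then have "g \<cdot> f = zero (Dom C f) (Cod C g)" using zero_arr_iff[of "g \<cdot> f"] assms(1-4) by simp
  then obtain h where h: "h \<in> Arr C" "Dom C h = Cod C q" "Cod C h = Cod C g" "h \<cdot> q = g" using assms(6) g by blast
  show "\<exists>!h. h \<in> hom C (Cod C q) (Cod C g) \<and> h \<cdot> q = g"
  proof (rule ex1I[of _ h])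
    show "h \<in> hom C (Cod C q) (Cod C g) \<and> h \<cdot> q = g" using h homI by blast
    fix h' assume "h' \<in> hom C (Cod C q) (Cod C g) \<and> h' \<cdot> q = g"
    then have "h' \<in> Arr C" "Dom C h' = Cod C q" "Cod C h' = Cod C g" "h' \<cdot> q = g" using homD by blast+
    then show "h' = h" using h by (intro assms(5)[of h' h]) simp_all
  qed
qed (use assms(1-3) in blast)+

end


context pcat begin

lemma pbD: "is_pullback C f g p1 p2 \<Longrightarrow> f \<in> Arr C \<and> g \<in> Arr C \<and> p1 \<in> Arr C \<and> p2 \<in> Arr C \<and> Cod C f = Cod C g \<and>
  Dom C p1 = Dom C p2 \<and> Cod C p1 = Dom C f \<and> Cod C p2 = Dom C g \<and> f \<cdot> p1 = g \<cdot> p2"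
  unfolding is_pullback_def by blast

lemma pb_univ: "is_pullback C f g p1 p2 \<Longrightarrow> q1 \<in> Arr C \<Longrightarrow> q2 \<in> Arr C \<Longrightarrow> Dom C q1 = Dom C q2 \<Longrightarrow>
  Cod C q1 = Dom C f \<Longrightarrow> Cod C q2 = Dom C g \<Longrightarrow> f \<cdot> q1 = g \<cdot> q2 \<Longrightarrow>
  \<exists>!h. h \<in> hom C (Dom C q1) (Dom C p1) \<and> p1 \<cdot> h = q1 \<and> p2 \<cdot> h = q2"
  unfolding is_pullback_def by blast

lemma pb_lift: "is_pullback C f g p1 p2 \<Longrightarrow> q1 \<in> Arr C \<Longrightarrow> q2 \<in> Arr C \<Longrightarrow> Dom C q1 = Dom C q2 \<Longrightarrow>
  Cod C q1 = Dom C f \<Longrightarrow> Cod C q2 = Dom C g \<Longrightarrow> f \<cdot> q1 = g \<cdot> q2 \<Longrightarrow>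
  \<exists>h. h \<in> Arr C \<and> Dom C h = Dom C q1 \<and> Cod C h = Dom C p1 \<and> p1 \<cdot> h = q1 \<and> p2 \<cdot> h = q2"
proof -
  assume a: "is_pullback C f g p1 p2" "q1 \<in> Arr C" "q2 \<in> Arr C" "Dom C q1 = Dom C q2"
    "Cod C q1 = Dom C f" "Cod C q2 = Dom C g" "f \<cdot> q1 = g \<cdot> q2"
  obtain h where "h \<in> hom C (Dom C q1) (Dom C p1) \<and> p1 \<cdot> h = q1 \<and> p2 \<cdot> h = q2" using pb_univ[OF a] by blast
  then show ?thesis using homD by blast
qed

lemma pb_uniq: assumes "is_pullback C f g p1 p2" "h \<in> Arr C" "h' \<in> Arr C" "Dom C h = Dom C h'"
  "Cod C h = Dom C p1" "Cod C h' = Dom C p1" "p1 \<cdot> h = p1 \<cdot> h'" "p2 \<cdot> h = p2 \<cdot> h'" shows "h = h'"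
proof -
  have P: "f \<in> Arr C" "g \<in> Arr C" "p1 \<in> Arr C" "p2 \<in> Arr C" "Cod C f = Cod C g"
  "Dom C p1 = Dom C p2" "Cod C p1 = Dom C f" "Cod C p2 = Dom C g" "f \<cdot> p1 = g \<cdot> p2" using pbD[OF assms(1)] by blast+
  have "f \<cdot> (p1 \<cdot> h) = (f \<cdot> p1) \<cdot> h" using assoc[of h p1 f] P assms by simp
  also have "\<dots> = (g \<cdot> p2) \<cdot> h" using P by simp
  also have "\<dots> = g \<cdot> (p2 \<cdot> h)" using assoc[of h p2 g] P assms by simp
  finally have e: "\<exists>!k. k \<in> hom C (Dom C h) (Dom C p1) \<and> p1 \<cdot> k = p1 \<cdot> h \<and> p2 \<cdot> k = p2 \<cdot> h"
    using pb_univ[OF assms(1), of "p1 \<cdot> h" "p2 \<cdot> h"] P assms by simp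
  have hh: "h \<in> hom C (Dom C h) (Dom C p1)" "h' \<in> hom C (Dom C h) (Dom C p1)" using assms homI by auto
  show "h = h'" by (rule ex1_uniq[OF e]) (use hh assms(7,8) in auto)
qed

lemma pb_mono: assumes "is_pullback C f m p1 p2" "mono C m" shows "mono C p1"
  unfolding mono_def
proof (intro conjI ballI impI)
  have P: "f \<in> Arr C" "m \<in> Arr C" "p1 \<in> Arr C" "p2 \<in> Arr C" "Cod C f = Cod C m"
  "Dom C p1 = Dom C p2" "Cod C p1 = Dom C f" "Cod C p2 = Dom C m" "f \<cdot> p1 = m \<cdot> p2" using pbD[OF assms(1)] by blast+
  show "p1 \<in> Arr C" using P by blast
  fix u w assume u: "u \<in> Arr C" "w \<in> Arr C" "Dom C u = Dom C w" "Cod C u = Dom C p1" "Cod C w = Dom C p1"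
    "p1 \<cdot> u = p1 \<cdot> w"
  have "m \<cdot> (p2 \<cdot> u) = (m \<cdot> p2) \<cdot> u" using assoc[of u p2 m] P u by simp
  also have "\<dots> = (f \<cdot> p1) \<cdot> u" using P by simp
  also have "\<dots> = f \<cdot> (p1 \<cdot> u)" using assoc[of u p1 f] P u by simp
  also have "\<dots> = f \<cdot> (p1 \<cdot> w)" using u by simp
  also have "\<dots> = (f \<cdot> p1) \<cdot> w" using assoc[of w p1 f] P u by simp
  also have "\<dots> = (m \<cdot> p2) \<cdot> w" using P by simp
  also have "\<dots> = m \<cdot> (p2 \<cdot> w)" using assoc[of w p2 m] P u by simp
  finally have "m \<cdot> (p2 \<cdot> u) = m \<cdot> (p2 \<cdot> w)" .
  then have "p2 \<cdot> u = p2 \<cdot> w" using mono_cancel[OF assms(2), of "p2 \<cdot> u" "p2 \<cdot> w"] P u by simp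
  then show "u = w" using pb_uniq[OF assms(1), of u w] u by simp
qed

lemma coeqD: "is_coequalizer C e a b \<Longrightarrow> e \<in> Arr C \<and> a \<in> Arr C \<and> b \<in> Arr C \<and> Dom C e = Cod C a \<and>
   Cod C a = Cod C b \<and> Dom C a = Dom C b \<and> e \<cdot> a = e \<cdot> b"
  unfolding is_coequalizer_def by blast

lemma coeq_univ: "is_coequalizer C e a b \<Longrightarrow> h \<in> Arr C \<Longrightarrow> Dom C h = Cod C a \<Longrightarrow> h \<cdot> a = h \<cdot> b \<Longrightarrow>
  \<exists>!u. u \<in> hom C (Cod C e) (Cod C h) \<and> u \<cdot> e = h"
  unfolding is_coequalizer_def by blast

lemma coeq_lift: "is_coequalizer C e a b \<Longrightarrow> h \<in> Arr C \<Longrightarrow> Dom C h = Cod C a \<Longrightarrow> h \<cdot> a = h \<cdot> b \<Longrightarrow>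
  \<exists>u. u \<in> Arr C \<and> Dom C u = Cod C e \<and> Cod C u = Cod C h \<and> u \<cdot> e = h"
proof -
  assume a: "is_coequalizer C e a b" "h \<in> Arr C" "Dom C h = Cod C a" "h \<cdot> a = h \<cdot> b"
  obtain u where "u \<in> hom C (Cod C e) (Cod C h) \<and> u \<cdot> e = h" using coeq_univ[OF a] by blast
  then show ?thesis using homD by blast
qed

lemma coeq_epi: assumes "is_coequalizer C e a b" "u \<in> Arr C" "w \<in> Arr C" "Dom C u = Cod C e" "Dom C w = Cod C e"
  "Cod C u = Cod C w" "u \<cdot> e = w \<cdot> e" shows "u = w"
proof -
  have P: "e \<in> Arr C" "a \<in> Arr C" "b \<in> Arr C" "Dom C e = Cod C a"
   "Cod C a = Cod C b" "Dom C a = Dom C b" "e \<cdot> a = e \<cdot> b" using coeqD[OF assms(1)] by blast+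
  have "(u \<cdot> e) \<cdot> a = u \<cdot> (e \<cdot> a)" using assoc[of a e u] P assms by simp
  also have "\<dots> = u \<cdot> (e \<cdot> b)" using P by simp
  also have "\<dots> = (u \<cdot> e) \<cdot> b" using assoc[of b e u] P assms by simp
  finally have e: "\<exists>!v. v \<in> hom C (Cod C e) (Cod C u) \<and> v \<cdot> e = u \<cdot> e"
    using coeq_univ[OF assms(1), of "u \<cdot> e"] P assms by simp
  have hh: "u \<in> hom C (Cod C e) (Cod C u)" "w \<in> hom C (Cod C e) (Cod C u)" using assms homI by auto
  show "u = w" by (rule ex1_uniq[OF e]) (use hh assms(7) in auto)
qed

lemma coeq_orth: assumes "is_coequalizer C e a b" "mono C m" "t \<in> Arr C" "s \<in> Arr C" "Dom C t = Dom C e"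
  "Cod C t = Dom C m" "Dom C s = Cod C e" "Cod C s = Cod C m" "m \<cdot> t = s \<cdot> e"
  shows "\<exists>d. d \<in> Arr C \<and> Dom C d = Cod C e \<and> Cod C d = Dom C m \<and> m \<cdot> d = s"
proof -
  have P: "e \<in> Arr C" "a \<in> Arr C" "b \<in> Arr C" "Dom C e = Cod C a"
   "Cod C a = Cod C b" "Dom C a = Dom C b" "e \<cdot> a = e \<cdot> b" using coeqD[OF assms(1)] by blast+
  have m: "m \<in> Arr C" using assms(2) unfolding mono_def by blast
  have "m \<cdot> (t \<cdot> a) = (m \<cdot> t) \<cdot> a" using assoc[of a t m] P assms m by simp
  also have "\<dots> = (s \<cdot> e) \<cdot> a" using assms by simp
  also have "\<dots> = s \<cdot> (e \<cdot> a)" using assoc[of a e s] P assms by simp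
  also have "\<dots> = s \<cdot> (e \<cdot> b)" using P by simp
  also have "\<dots> = (s \<cdot> e) \<cdot> b" using assoc[of b e s] P assms by simp
  also have "\<dots> = (m \<cdot> t) \<cdot> b" using assms by simp
  also have "\<dots> = m \<cdot> (t \<cdot> b)" using assoc[of b t m] P assms m by simp
  finally have "m \<cdot> (t \<cdot> a) = m \<cdot> (t \<cdot> b)" .
  then have tt: "t \<cdot> a = t \<cdot> b" using mono_cancel[OF assms(2), of "t \<cdot> a" "t \<cdot> b"] P assms m by simp
  obtain d where d: "d \<in> Arr C" "Dom C d = Cod C e" "Cod C d = Cod C t" "d \<cdot> e = t"
    using coeq_lift[OF assms(1), of t] P assms tt by auto
  have "(m \<cdot> d) \<cdot> e = m \<cdot> (d \<cdot> e)" using assoc[of e d m] d assms m P by simp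
  also have "\<dots> = s \<cdot> e" using d assms by simp
  finally have "m \<cdot> d = s" using coeq_epi[OF assms(1), of "m \<cdot> d" s] d assms m by simp
  then show ?thesis using d assms by auto
qed

end


context pcat begin

lemma poD: "is_pushout C f g p1 p2 \<Longrightarrow> f \<in> Arr C \<and> g \<in> Arr C \<and> p1 \<in> Arr C \<and> p2 \<in> Arr C \<and> Dom C f = Dom C g \<and>
  Cod C p1 = Cod C p2 \<and> Dom C p1 = Cod C f \<and> Dom C p2 = Cod C g \<and> p1 \<cdot> f = p2 \<cdot> g"
  unfolding is_pushout_def by blast

lemma po_univ: "is_pushout C f g p1 p2 \<Longrightarrow> q1 \<in> Arr C \<Longrightarrow> q2 \<in> Arr C \<Longrightarrow> Cod C q1 = Cod C q2 \<Longrightarrow>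
  Dom C q1 = Cod C f \<Longrightarrow> Dom C q2 = Cod C g \<Longrightarrow> q1 \<cdot> f = q2 \<cdot> g \<Longrightarrow>
  \<exists>!h. h \<in> hom C (Cod C p1) (Cod C q1) \<and> h \<cdot> p1 = q1 \<and> h \<cdot> p2 = q2"
  unfolding is_pushout_def by blast

lemma iso_inv: assumes "iso C f"
  obtains g where "g \<in> Arr C" "Dom C g = Cod C f" "Cod C g = Dom C f"
    "g \<cdot> f = Idt C (Dom C f)" "f \<cdot> g = Idt C (Cod C f)"
  using isoE[OF assms] by blast

lemma iso_epi: assumes "iso C e" "u \<in> Arr C" "w \<in> Arr C" "Dom C u = Cod C e" "Dom C w = Cod C e" "u \<cdot> e = w \<cdot> e"
  shows "u = w"
proof -
  have e: "e \<in> Arr C" using iso_arr[OF assms(1)] .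
  obtain i where i: "i \<in> Arr C" "Dom C i = Cod C e" "Cod C i = Dom C e"
    "i \<cdot> e = Idt C (Dom C e)" "e \<cdot> i = Idt C (Cod C e)" using iso_inv[OF assms(1)] by blast
  have "u = u \<cdot> (e \<cdot> i)" using i assms by simp
  also have "\<dots> = (u \<cdot> e) \<cdot> i" using assoc[of i e u] i e assms by simp
  also have "\<dots> = (w \<cdot> e) \<cdot> i" using assms by simp
  also have "\<dots> = w \<cdot> (e \<cdot> i)" using assoc[of i e w] i e assms by simp
  also have "\<dots> = w" using i assms by simp
  finally show ?thesis .
qed

lemma pb_ex: "finitely_complete C \<Longrightarrow> f \<in> Arr C \<Longrightarrow> g \<in> Arr C \<Longrightarrow> Cod C f = Cod C g \<Longrightarrow> \<exists>p1 p2. is_pullback C f g p1 p2"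
  unfolding finitely_complete_def by blast
lemma po_ex: "finitely_cocomplete C \<Longrightarrow> f \<in> Arr C \<Longrightarrow> g \<in> Arr C \<Longrightarrow> Dom C f = Dom C g \<Longrightarrow> \<exists>p1 p2. is_pushout C f g p1 p2"
  unfolding finitely_cocomplete_def by blast

lemma ter_eq: "f \<in> Arr C \<Longrightarrow> Cod C f = z \<Longrightarrow> Dom C f = a \<Longrightarrow> f = ter a"
  using ter_uniq by blast
lemma ini_eq: "f \<in> Arr C \<Longrightarrow> Dom C f = z \<Longrightarrow> Cod C f = b \<Longrightarrow> f = ini b"
  using ini_uniq by blast

lemma ker_ex: assumes f: "f \<in> Arr C" and fc: "finitely_complete C" shows "\<exists>k. is_kernel C k f"
proof -
  let ?b = "Cod C f"
  have bo: "?b \<in> Obj C" using f cod_obj by blast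
  have I: "ini ?b \<in> Arr C" "Dom C (ini ?b) = z" "Cod C (ini ?b) = ?b" using ini[OF bo] by auto
  obtain p1 p2 where P: "is_pullback C f (ini ?b) p1 p2"
    using pb_ex[OF fc f I(1)] I(3) by auto
  have P': "p1 \<in> Arr C" "p2 \<in> Arr C" "Dom C p2 = Dom C p1" "Cod C p1 = Dom C f" "Cod C p2 = z" "f \<cdot> p1 = ini ?b \<cdot> p2"
    using pbD[OF P] I by auto
  have p2t: "p2 = ter (Dom C p1)" by (rule ter_eq) (use P' in simp_all)
  have o1: "Dom C p1 \<in> Obj C" using P' dom_obj by blast
  show ?thesis
  proof (rule exI, rule kerI)
    show "p1 \<in> Arr C" "f \<in> Arr C" "Cod C p1 = Dom C f" using P' f by auto
    show "f \<cdot> p1 = zero (Dom C p1) (Cod C f)" unfolding zero_def using P'(6) p2t by simp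
    show "mono C p1" unfolding mono_def
    proof (intro conjI ballI impI)
      show "p1 \<in> Arr C" using P' by blast
      fix u w assume u: "u \<in> Arr C" "w \<in> Arr C" "Dom C u = Dom C w" "Cod C u = Dom C p1" "Cod C w = Dom C p1"
        "p1 \<cdot> u = p1 \<cdot> w"
      have "p2 \<cdot> u = ter (Dom C u)" by (rule ter_eq) (use P' u in simp_all)
      moreover have "p2 \<cdot> w = ter (Dom C u)" by (rule ter_eq) (use P' u in simp_all)
      ultimately show "u = w" using pb_uniq[OF P, of u w] u by simp
    qed
    fix g assume g: "g \<in> Arr C" "Cod C g = Dom C f" "f \<cdot> g = zero (Dom C g) (Cod C f)"
    have go: "Dom C g \<in> Obj C" using g dom_obj by blast
    have T: "ter (Dom C g) \<in> Arr C" "Dom C (ter (Dom C g)) = Dom C g" "Cod C (ter (Dom C g)) = z" using ter[OF go] by auto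
    have "f \<cdot> g = ini ?b \<cdot> ter (Dom C g)" using g(3) unfolding zero_def .
    then obtain h where "h \<in> Arr C \<and> Dom C h = Dom C g \<and> Cod C h = Dom C p1 \<and> p1 \<cdot> h = g \<and> p2 \<cdot> h = ter (Dom C g)"
      using pb_lift[OF P g(1) T(1)] g T I by auto
    then show "\<exists>h. h \<in> Arr C \<and> Dom C h = Dom C g \<and> Cod C h = Dom C p1 \<and> p1 \<cdot> h = g" by blast
  qed
qed

lemma cok_ex: assumes k: "k \<in> Arr C" and fc: "finitely_cocomplete C" shows "\<exists>q. is_cokernel C q k"
proof -
  let ?a = "Dom C k"
  have ao: "?a \<in> Obj C" using k dom_obj by blast
  have T: "ter ?a \<in> Arr C" "Dom C (ter ?a) = ?a" "Cod C (ter ?a) = z" using ter[OF ao] by auto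
  obtain p1 p2 where P: "is_pushout C k (ter ?a) p1 p2"
    using po_ex[OF fc k T(1)] T(2) by auto
  have P': "p1 \<in> Arr C" "p2 \<in> Arr C" "Cod C p2 = Cod C p1" "Dom C p1 = Cod C k" "Dom C p2 = z" "p1 \<cdot> k = p2 \<cdot> ter ?a"
    using poD[OF P] T by auto
  have p2i: "p2 = ini (Cod C p1)" by (rule ini_eq) (use P' in simp_all)
  have o1: "Cod C p1 \<in> Obj C" using P' cod_obj by blast
  show ?thesis
  proof (rule exI, rule cokI)
    show "p1 \<in> Arr C" "k \<in> Arr C" "Dom C p1 = Cod C k" using P' k by auto
    show "p1 \<cdot> k = zero (Dom C k) (Cod C p1)" unfolding zero_def using P'(6) p2i by simp
  next
    fix u w assume u: "u \<in> Arr C" "w \<in> Arr C" "Dom C u = Cod C p1" "Dom C w = Cod C p1" "Cod C u = Cod C w"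
      "u \<cdot> p1 = w \<cdot> p1"
    have uo: "Cod C u \<in> Obj C" using u cod_obj by blast
    have a1: "u \<cdot> p2 = ini (Cod C u)" by (rule ini_eq) (use P' u in simp_all)
    have a2: "w \<cdot> p2 = ini (Cod C u)" by (rule ini_eq) (use P' u in simp_all)
    have "(u \<cdot> p1) \<cdot> k = u \<cdot> (p1 \<cdot> k)" using assoc[of k p1 u] P' u k by simp
    also have "\<dots> = u \<cdot> (p2 \<cdot> ter ?a)" using P'(6) by simp
    also have "\<dots> = (u \<cdot> p2) \<cdot> ter ?a" using assoc[of "ter ?a" p2 u] P' u T by simp
    finally have eq1: "(u \<cdot> p1) \<cdot> k = (u \<cdot> p2) \<cdot> ter ?a" .
    have e: "\<exists>!h. h \<in> hom C (Cod C p1) (Cod C (u \<cdot> p1)) \<and> h \<cdot> p1 = u \<cdot> p1 \<and> h \<cdot> p2 = u \<cdot> p2"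
      using po_univ[OF P, of "u \<cdot> p1" "u \<cdot> p2"] P' u T eq1 by simp
    have hh: "u \<in> hom C (Cod C p1) (Cod C (u \<cdot> p1))" "w \<in> hom C (Cod C p1) (Cod C (u \<cdot> p1))" using u P' homI by auto
    show "u = w" by (rule ex1_uniq[OF e]) (use hh u(6) a1 a2 in auto)
  next
    fix g assume g: "g \<in> Arr C" "Dom C g = Cod C k" "g \<cdot> k = zero (Dom C k) (Cod C g)"
    have go: "Cod C g \<in> Obj C" using g cod_obj by blast
    have I: "ini (Cod C g) \<in> Arr C" "Dom C (ini (Cod C g)) = z" "Cod C (ini (Cod C g)) = Cod C g" using ini[OF go] by auto
    have "g \<cdot> k = ini (Cod C g) \<cdot> ter ?a" using g(3) unfolding zero_def .
    then obtain h where "h \<in> hom C (Cod C p1) (Cod C g) \<and> h \<cdot> p1 = g \<and> h \<cdot> p2 = ini (Cod C g)"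
      using po_univ[OF P g(1) I(1)] g I T by auto
    then show "\<exists>h. h \<in> Arr C \<and> Dom C h = Cod C p1 \<and> Cod C h = Cod C g \<and> h \<cdot> p1 = g" using homD by blast
  qed
qed

end


context cat begin
lemma assoc_rw: "f \<in> Arr C \<Longrightarrow> g \<in> Arr C \<Longrightarrow> h \<in> Arr C \<Longrightarrow> Cod C f = Dom C g \<Longrightarrow> Cod C g = Dom C h \<Longrightarrow>
   h \<cdot> g = k \<Longrightarrow> h \<cdot> (g \<cdot> f) = k \<cdot> f"
  using assoc by metis
lemma assoc_rw': "f \<in> Arr C \<Longrightarrow> g \<in> Arr C \<Longrightarrow> h \<in> Arr C \<Longrightarrow> Cod C f = Dom C g \<Longrightarrow> Cod C g = Dom C h \<Longrightarrow>
   g \<cdot> f = k \<Longrightarrow> (h \<cdot> g) \<cdot> f = h \<cdot> k"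
  using assoc by metis

lemma split_mono: assumes "s \<in> Arr C" "r \<in> Arr C" "Cod C s = Dom C r" "r \<cdot> s = Idt C (Dom C s)" shows "mono C s"
  unfolding mono_def
proof (intro conjI ballI impI)
  show "s \<in> Arr C" by fact
  fix u w assume u: "u \<in> Arr C" "w \<in> Arr C" "Dom C u = Dom C w" "Cod C u = Dom C s" "Cod C w = Dom C s"
    "s \<cdot> u = s \<cdot> w"
  have "u = (r \<cdot> s) \<cdot> u" using assms u by simp
  also have "\<dots> = r \<cdot> (s \<cdot> u)" using assoc[of u s r] assms u by simp
  also have "\<dots> = r \<cdot> (s \<cdot> w)" using u by simp
  also have "\<dots> = (r \<cdot> s) \<cdot> w" using assoc[of w s r] assms u by simp
  also have "\<dots> = w" using assms u by simp
  finally show "u = w" .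
qed
end

locale hcat = pcat +
  assumes homol: "homological C" and cocompl: "finitely_cocomplete C"
begin

lemma fcompl: "finitely_complete C" using homol unfolding homological_def regular_category_def by blast
lemma ssfl: "split_short_five_lemma C" using homol unfolding homological_def by blast
lemma factor: "f \<in> Arr C \<Longrightarrow> \<exists>e m. regular_epi C e \<and> mono C m \<and> Cod C e = Dom C m \<and> f = m \<cdot> e"
  using homol unfolding homological_def regular_category_def by blast

lemma eq_ex: assumes u: "u \<in> Arr C" "w \<in> Arr C" "Dom C u = Dom C w" "Cod C u = Cod C w"
  shows "\<exists>e. e \<in> Arr C \<and> Cod C e = Dom C u \<and> mono C e \<and> u \<cdot> e = w \<cdot> e \<and>
     (\<forall>h. h \<in> Arr C \<longrightarrow> Cod C h = Dom C u \<longrightarrow> u \<cdot> h = w \<cdot> h \<longrightarrow>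
        (\<exists>h'. h' \<in> Arr C \<and> Dom C h' = Dom C h \<and> Cod C h' = Dom C e \<and> e \<cdot> h' = h))"
proof -
  define R where "R = Dom C u"
  define Z where "Z = Cod C u"
  have RZ: "R \<in> Obj C" "Z \<in> Obj C" using u dom_obj cod_obj unfolding R_def Z_def by auto
  have TR: "ter R \<in> Arr C" "Dom C (ter R) = R" "Cod C (ter R) = z" using ter[OF RZ(1)] by auto
  have TZ: "ter Z \<in> Arr C" "Dom C (ter Z) = Z" "Cod C (ter Z) = z" using ter[OF RZ(2)] by auto
  obtain \<pi>1 \<pi>2 where P: "is_pullback C (ter R) (ter Z) \<pi>1 \<pi>2" using pb_ex[OF fcompl TR(1) TZ(1)] TR TZ by auto
  have P': "\<pi>1 \<in> Arr C" "\<pi>2 \<in> Arr C" "Dom C \<pi>2 = Dom C \<pi>1" "Cod C \<pi>1 = R" "Cod C \<pi>2 = Z"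
    using pbD[OF P] TR TZ by auto
  have pair: "\<exists>h. h \<in> Arr C \<and> Dom C h = R \<and> Cod C h = Dom C \<pi>1 \<and> \<pi>1 \<cdot> h = Idt C R \<and> \<pi>2 \<cdot> h = v"
    if v: "v \<in> Arr C" "Dom C v = R" "Cod C v = Z" for v
  proof -
    have "ter R \<cdot> Idt C R = ter R" using TR by simp
    also have "\<dots> = ter Z \<cdot> v" by (rule sym, rule ter_eq) (use TZ v in simp_all)
    finally have "ter R \<cdot> Idt C R = ter Z \<cdot> v" .
    then show ?thesis using pb_lift[OF P, of "Idt C R" v] RZ TR TZ v by simp
  qed
  obtain \<alpha> where \<alpha>: "\<alpha> \<in> Arr C" "Dom C \<alpha> = R" "Cod C \<alpha> = Dom C \<pi>1" "\<pi>1 \<cdot> \<alpha> = Idt C R" "\<pi>2 \<cdot> \<alpha> = u"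
    using pair[of u] u unfolding R_def Z_def by blast
  obtain \<beta> where \<beta>: "\<beta> \<in> Arr C" "Dom C \<beta> = R" "Cod C \<beta> = Dom C \<pi>1" "\<pi>1 \<cdot> \<beta> = Idt C R" "\<pi>2 \<cdot> \<beta> = w"
    using pair[of w] u unfolding R_def Z_def by metis
  obtain e1 e2 where E: "is_pullback C \<alpha> \<beta> e1 e2" using pb_ex[OF fcompl \<alpha>(1) \<beta>(1)] \<alpha> \<beta> by auto
  have E': "e1 \<in> Arr C" "e2 \<in> Arr C" "Dom C e2 = Dom C e1" "Cod C e1 = R" "Cod C e2 = R" "\<alpha> \<cdot> e1 = \<beta> \<cdot> e2"
    using pbD[OF E] \<alpha> \<beta> by auto
  have "e1 = (\<pi>1 \<cdot> \<alpha>) \<cdot> e1" using \<alpha> E' RZ by simp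
  also have "\<dots> = \<pi>1 \<cdot> (\<alpha> \<cdot> e1)" using assoc[of e1 \<alpha> \<pi>1] \<alpha> E' P' by simp
  also have "\<dots> = \<pi>1 \<cdot> (\<beta> \<cdot> e2)" using E' by simp
  also have "\<dots> = (\<pi>1 \<cdot> \<beta>) \<cdot> e2" using assoc[of e2 \<beta> \<pi>1] \<beta> E' P' by simp
  also have "\<dots> = e2" using \<beta> E' RZ by simp
  finally have e12: "e1 = e2" .
  have "u \<cdot> e1 = (\<pi>2 \<cdot> \<alpha>) \<cdot> e1" using \<alpha> by simp
  also have "\<dots> = \<pi>2 \<cdot> (\<alpha> \<cdot> e1)" using assoc[of e1 \<alpha> \<pi>2] \<alpha> E' P' by simp
  also have "\<dots> = \<pi>2 \<cdot> (\<beta> \<cdot> e2)" using E' by simp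
  also have "\<dots> = (\<pi>2 \<cdot> \<beta>) \<cdot> e2" using assoc[of e2 \<beta> \<pi>2] \<beta> E' P' by simp
  also have "\<dots> = w \<cdot> e1" using \<beta> e12 by simp
  finally have ue: "u \<cdot> e1 = w \<cdot> e1" .
  have mb: "mono C \<beta>" by (rule split_mono[of \<beta> \<pi>1]) (use \<beta> P' in simp_all)
  have me: "mono C e1" using pb_mono[OF E mb] .
  show ?thesis
  proof (rule exI[of _ e1], intro conjI allI impI)
    show "e1 \<in> Arr C" "Cod C e1 = Dom C u" "mono C e1" "u \<cdot> e1 = w \<cdot> e1" using E' me ue unfolding R_def by auto
    fix h assume h: "h \<in> Arr C" "Cod C h = Dom C u" "u \<cdot> h = w \<cdot> h"
    have ho: "Dom C h \<in> Obj C" using h dom_obj by blast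
    have "\<pi>1 \<cdot> (\<alpha> \<cdot> h) = Idt C R \<cdot> h" by (rule assoc_rw) (use \<alpha> P' h R_def in simp_all)
    moreover have "\<pi>1 \<cdot> (\<beta> \<cdot> h) = Idt C R \<cdot> h" by (rule assoc_rw) (use \<beta> P' h R_def in simp_all)
    moreover have "\<pi>2 \<cdot> (\<alpha> \<cdot> h) = u \<cdot> h" by (rule assoc_rw) (use \<alpha> P' h R_def in simp_all)
    moreover have "\<pi>2 \<cdot> (\<beta> \<cdot> h) = w \<cdot> h" by (rule assoc_rw) (use \<beta> P' h R_def in simp_all)
    ultimately have "\<alpha> \<cdot> h = \<beta> \<cdot> h" using pb_uniq[OF P, of "\<alpha> \<cdot> h" "\<beta> \<cdot> h"] \<alpha> \<beta> h R_def by simp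
    then obtain h' where "h' \<in> Arr C \<and> Dom C h' = Dom C h \<and> Cod C h' = Dom C e1 \<and> e1 \<cdot> h' = h \<and> e2 \<cdot> h' = h"
      using pb_lift[OF E h(1) h(1)] \<alpha> \<beta> h R_def by auto
    then show "\<exists>h'. h' \<in> Arr C \<and> Dom C h' = Dom C h \<and> Cod C h' = Dom C e1 \<and> e1 \<cdot> h' = h" by blast
  qed
qed

end


context hcat begin

lemma split_iso:
  assumes p: "p \<in> Arr C" and s: "s \<in> Arr C" "Dom C s = Cod C p" "Cod C s = Dom C p" "p \<cdot> s = Idt C (Cod C p)"
    and k: "is_kernel C k p" and m: "mono C m" "Cod C m = Dom C p"
    and s': "s' \<in> Arr C" "Dom C s' = Cod C p" "Cod C s' = Dom C m" "m \<cdot> s' = s"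
    and k': "k' \<in> Arr C" "Dom C k' = Dom C k" "Cod C k' = Dom C m" "m \<cdot> k' = k"
  shows "iso C m"
proof -
  have ma: "m \<in> Arr C" using m unfolding mono_def by blast
  have K: "k \<in> Arr C" "Cod C k = Dom C p" "p \<cdot> k = zero (Dom C k) (Cod C p)" using kerD[OF k] by auto
  have ob: "Dom C k \<in> Obj C" "Cod C p \<in> Obj C" using K p dom_obj cod_obj by auto
  have pm: "p \<cdot> m \<in> Arr C" "Dom C (p \<cdot> m) = Dom C m" "Cod C (p \<cdot> m) = Cod C p" using p ma m by auto
  have k'ker: "is_kernel C k' (p \<cdot> m)"
  proof (rule kerI)
    show "k' \<in> Arr C" "p \<cdot> m \<in> Arr C" "Cod C k' = Dom C (p \<cdot> m)" using k' pm by auto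
    have "(p \<cdot> m) \<cdot> k' = p \<cdot> k" by (rule assoc_rw') (use p ma m k' in simp_all)
    then show "(p \<cdot> m) \<cdot> k' = zero (Dom C k') (Cod C (p \<cdot> m))" using K k' pm by simp
    show "mono C k'" unfolding mono_def
    proof (intro conjI ballI impI)
      show "k' \<in> Arr C" by (rule k')
      fix u w assume u: "u \<in> Arr C" "w \<in> Arr C" "Dom C u = Dom C w" "Cod C u = Dom C k'" "Cod C w = Dom C k'"
        "k' \<cdot> u = k' \<cdot> w"
      have "k \<cdot> u = m \<cdot> (k' \<cdot> u)" by (rule sym, rule assoc_rw) (use u k' ma in simp_all)
      also have "\<dots> = m \<cdot> (k' \<cdot> w)" using u by simp
      also have "\<dots> = k \<cdot> w" by (rule assoc_rw) (use u k' ma in simp_all)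
      finally show "u = w" using mono_cancel[OF ker_mono[OF k], of u w] u k' by simp
    qed
    fix g assume g: "g \<in> Arr C" "Cod C g = Dom C (p \<cdot> m)" "(p \<cdot> m) \<cdot> g = zero (Dom C g) (Cod C (p \<cdot> m))"
    have "p \<cdot> (m \<cdot> g) = zero (Dom C (m \<cdot> g)) (Cod C p)"
      using assoc[of g m p] g pm ma m p by simp
    then obtain h where h: "h \<in> Arr C" "Dom C h = Dom C (m \<cdot> g)" "Cod C h = Dom C k" "k \<cdot> h = m \<cdot> g"
      using ker_lift[OF k, of "m \<cdot> g"] g pm ma m by auto
    have "m \<cdot> (k' \<cdot> h) = k \<cdot> h" by (rule assoc_rw) (use h k' ma in simp_all)
    then have "k' \<cdot> h = g" using mono_cancel[OF m(1), of "k' \<cdot> h" g] h k' g pm ma by simp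
    then show "\<exists>h. h \<in> Arr C \<and> Dom C h = Dom C g \<and> Cod C h = Dom C k' \<and> k' \<cdot> h = g"
      using h k' g pm ma by (intro exI[of _ h]) simp
  qed
  have "iso C m"
  proof (rule ssfl[unfolded split_short_five_lemma_def, rule_format,
        of "p \<cdot> m" s' k' p s k "Idt C (Dom C k)" m "Idt C (Cod C p)"])
    show "p \<cdot> m \<in> Arr C" by (rule pm)
    show "s' \<in> hom C (Cod C (p \<cdot> m)) (Dom C (p \<cdot> m))" using s' pm homI by simp
    show "(p \<cdot> m) \<cdot> s' = Idt C (Cod C (p \<cdot> m))"
    proof -
      have "(p \<cdot> m) \<cdot> s' = p \<cdot> s" by (rule assoc_rw') (use p ma m s' in simp_all)
      then show ?thesis using s pm by simp
    qed
    show "is_kernel C k' (p \<cdot> m)" by (rule k'ker)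
    show "p \<in> Arr C" by (rule p)
    show "s \<in> hom C (Cod C p) (Dom C p)" using s homI by simp
    show "p \<cdot> s = Idt C (Cod C p)" by (rule s)
    show "is_kernel C k p" by (rule k)
    show "Idt C (Dom C k) \<in> hom C (Dom C k') (Dom C k)" using ob k' homI by simp
    show "m \<in> hom C (Dom C (p \<cdot> m)) (Dom C p)" using ma m pm homI by simp
    show "Idt C (Cod C p) \<in> hom C (Cod C (p \<cdot> m)) (Cod C p)" using ob pm homI by simp
    show "m \<cdot> k' = k \<cdot> Idt C (Dom C k)" using k' K by simp
    show "p \<cdot> m = Idt C (Cod C p) \<cdot> (p \<cdot> m)" using pm by simp
    show "m \<cdot> s' = s \<cdot> Idt C (Cod C p)" using s' s by simp
    show "iso C (Idt C (Dom C k))" using id_iso ob by simp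
    show "iso C (Idt C (Cod C p))" using id_iso ob by simp
  qed
  then show ?thesis .
qed

lemma split_jepi:
  assumes p: "p \<in> Arr C" and s: "s \<in> Arr C" "Dom C s = Cod C p" "Cod C s = Dom C p" "p \<cdot> s = Idt C (Cod C p)"
    and k: "is_kernel C k p"
    and u: "u \<in> Arr C" "w \<in> Arr C" "Dom C u = Dom C p" "Dom C w = Dom C p" "Cod C u = Cod C w"
    and us: "u \<cdot> s = w \<cdot> s" and uk: "u \<cdot> k = w \<cdot> k"
  shows "u = w"
proof -
  have K: "k \<in> Arr C" "Cod C k = Dom C p" using kerD[OF k] by auto
  obtain e where e: "e \<in> Arr C" "Cod C e = Dom C u" "mono C e" "u \<cdot> e = w \<cdot> e"
    and eu: "\<And>h. h \<in> Arr C \<Longrightarrow> Cod C h = Dom C u \<Longrightarrow> u \<cdot> h = w \<cdot> h \<Longrightarrow>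
        (\<exists>h'. h' \<in> Arr C \<and> Dom C h' = Dom C h \<and> Cod C h' = Dom C e \<and> e \<cdot> h' = h)"
    using eq_ex[OF u(1,2)] u(3,4,5) by auto
  obtain s' where s': "s' \<in> Arr C" "Dom C s' = Dom C s" "Cod C s' = Dom C e" "e \<cdot> s' = s"
    using eu[of s] s u us by auto
  obtain k' where k': "k' \<in> Arr C" "Dom C k' = Dom C k" "Cod C k' = Dom C e" "e \<cdot> k' = k"
    using eu[of k] K u uk by auto
  have ie: "iso C e" by (rule split_iso[OF p s k e(3) _ _ _ _ s'(4) k']) (use e u s s' in simp_all)
  show "u = w" by (rule iso_epi[OF ie]) (use u e in simp_all)
qed

end


context hcat begin

lemma reg_normal: assumes "regular_epi C f" shows "normal_epi C f"
proof -
  obtain a b where cq: "is_coequalizer C f a b" using assms unfolding regular_epi_def by blast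
  have F: "f \<in> Arr C" "a \<in> Arr C" "b \<in> Arr C" "Dom C f = Cod C a" "Cod C b = Cod C a" "Dom C b = Dom C a" "f \<cdot> a = f \<cdot> b"
    using coeqD[OF cq] by auto
  define A where "A = Dom C f"
  have Ao: "A \<in> Obj C" using F dom_obj unfolding A_def by blast
  obtain k where k: "is_kernel C k f" using ker_ex[OF F(1) fcompl] by blast
  have K: "k \<in> Arr C" "Cod C k = A" "f \<cdot> k = zero (Dom C k) (Cod C f)" using kerD[OF k] unfolding A_def by auto
  obtain q where q: "is_cokernel C q k" using cok_ex[OF K(1) cocompl] by blast
  have Q: "q \<in> Arr C" "Dom C q = A" "q \<cdot> k = zero (Dom C k) (Cod C q)" using cokD[OF q] K by auto
  obtain p1 p2 where P: "is_pullback C f f p1 p2" using pb_ex[OF fcompl F(1) F(1)] by blast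
  have P': "p1 \<in> Arr C" "p2 \<in> Arr C" "Dom C p2 = Dom C p1" "Cod C p1 = A" "Cod C p2 = A" "f \<cdot> p1 = f \<cdot> p2"
    using pbD[OF P] unfolding A_def by auto
  obtain \<delta> where \<delta>: "\<delta> \<in> Arr C" "Dom C \<delta> = A" "Cod C \<delta> = Dom C p1" "p1 \<cdot> \<delta> = Idt C A" "p2 \<cdot> \<delta> = Idt C A"
    using pb_lift[OF P, of "Idt C A" "Idt C A"] Ao F unfolding A_def by auto
  obtain k1 where k1: "is_kernel C k1 p1" using ker_ex[OF P'(1) fcompl] by blast
  have K1: "k1 \<in> Arr C" "Cod C k1 = Dom C p1" "p1 \<cdot> k1 = zero (Dom C k1) A" using kerD[OF k1] P' by auto
  have o1: "Dom C k1 \<in> Obj C" "Cod C f \<in> Obj C" "Cod C q \<in> Obj C" using K1 F Q dom_obj cod_obj by auto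
  have "f \<cdot> (p2 \<cdot> k1) = f \<cdot> (p1 \<cdot> k1)"
  proof -
    have "f \<cdot> (p2 \<cdot> k1) = (f \<cdot> p2) \<cdot> k1" using assoc[of k1 p2 f] P' K1 F A_def by simp
    also have "\<dots> = (f \<cdot> p1) \<cdot> k1" using P' by simp
    also have "\<dots> = f \<cdot> (p1 \<cdot> k1)" using assoc[of k1 p1 f] P' K1 F A_def by simp
    finally show ?thesis .
  qed
  also have "\<dots> = zero (Dom C k1) (Cod C f)" using K1 F o1 A_def by simp
  finally have fz: "f \<cdot> (p2 \<cdot> k1) = zero (Dom C (p2 \<cdot> k1)) (Cod C f)" using P' K1 by simp
  obtain t where t: "t \<in> Arr C" "Dom C t = Dom C (p2 \<cdot> k1)" "Cod C t = Dom C k" "k \<cdot> t = p2 \<cdot> k1"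
    using ker_lift[OF k, of "p2 \<cdot> k1"] fz P' K1 F A_def by auto
  have "(q \<cdot> p2) \<cdot> k1 = q \<cdot> (k \<cdot> t)" by (rule assoc_rw') (use P' K1 Q t A_def in simp_all)
  also have "\<dots> = (q \<cdot> k) \<cdot> t" using assoc[of t k q] t K Q by simp
  also have "\<dots> = zero (Dom C k1) (Cod C q)" using Q t P' K1 K o1 by simp
  also have "\<dots> = q \<cdot> (p1 \<cdot> k1)" using K1 Q o1 by simp
  also have "\<dots> = (q \<cdot> p1) \<cdot> k1" using assoc[of k1 p1 q] P' K1 Q by simp
  finally have qk: "(q \<cdot> p1) \<cdot> k1 = (q \<cdot> p2) \<cdot> k1" by simp
  have qd: "(q \<cdot> p1) \<cdot> \<delta> = (q \<cdot> p2) \<cdot> \<delta>"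
  proof -
    have "(q \<cdot> p1) \<cdot> \<delta> = q \<cdot> Idt C A" by (rule assoc_rw') (use P' \<delta> Q in simp_all)
    moreover have "(q \<cdot> p2) \<cdot> \<delta> = q \<cdot> Idt C A" by (rule assoc_rw') (use P' \<delta> Q in simp_all)
    ultimately show ?thesis by simp
  qed
  have qp: "q \<cdot> p1 = q \<cdot> p2"
    by (rule split_jepi[OF P'(1) \<delta>(1) _ _ _ k1 _ _ _ _ _ qd qk]) (use P' \<delta> Q Ao in simp_all)
  have "q \<cdot> a = q \<cdot> b"
  proof -
    obtain t' where t': "t' \<in> Arr C" "Dom C t' = Dom C a" "Cod C t' = Dom C p1" "p1 \<cdot> t' = a" "p2 \<cdot> t' = b"
      using pb_lift[OF P F(2) F(3)] F by auto
    have "q \<cdot> a = (q \<cdot> p1) \<cdot> t'" by (rule sym, rule assoc_rw') (use t' P' Q F A_def in simp_all)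
    also have "\<dots> = (q \<cdot> p2) \<cdot> t'" using qp by simp
    also have "\<dots> = q \<cdot> b" by (rule assoc_rw') (use t' P' Q F A_def in simp_all)
    finally show ?thesis .
  qed
  then obtain w0 where w0: "w0 \<in> Arr C" "Dom C w0 = Cod C f" "Cod C w0 = Cod C q" "w0 \<cdot> f = q"
    using coeq_lift[OF cq Q(1)] Q F A_def by auto
  have "is_cokernel C f k"
  proof (rule cokI)
    show "f \<in> Arr C" "k \<in> Arr C" "Dom C f = Cod C k" "f \<cdot> k = zero (Dom C k) (Cod C f)" using F K A_def by auto
  next
    fix u w assume "u \<in> Arr C" "w \<in> Arr C" "Dom C u = Cod C f" "Dom C w = Cod C f" "Cod C u = Cod C w" "u \<cdot> f = w \<cdot> f"
    then show "u = w" using coeq_epi[OF cq] by blast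
  next
    fix g assume g: "g \<in> Arr C" "Dom C g = Cod C k" "g \<cdot> k = zero (Dom C k) (Cod C g)"
    obtain h1 where h1: "h1 \<in> Arr C" "Dom C h1 = Cod C q" "Cod C h1 = Cod C g" "h1 \<cdot> q = g"
      using cok_lift[OF q g] by blast
    have "(h1 \<cdot> w0) \<cdot> f = h1 \<cdot> q" by (rule assoc_rw') (use h1 w0 F in simp_all)
    then show "\<exists>h. h \<in> Arr C \<and> Dom C h = Cod C f \<and> Cod C h = Cod C g \<and> h \<cdot> f = g"
      using h1 w0 by (intro exI[of _ "h1 \<cdot> w0"]) simp
  qed
  then show ?thesis unfolding normal_epi_def by blast
qed

lemma iso_cok: assumes q: "is_cokernel C e k" and m: "iso C m" "Dom C m = Cod C e" shows "is_cokernel C (m \<cdot> e) k"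
proof -
  have E: "e \<in> Arr C" "k \<in> Arr C" "Dom C e = Cod C k" "e \<cdot> k = zero (Dom C k) (Cod C e)" using cokD[OF q] by auto
  have ma: "m \<in> Arr C" using iso_arr[OF m(1)] .
  obtain i where i: "i \<in> Arr C" "Dom C i = Cod C m" "Cod C i = Dom C m"
    "i \<cdot> m = Idt C (Dom C m)" "m \<cdot> i = Idt C (Cod C m)" using iso_inv[OF m(1)] by blast
  have o: "Dom C k \<in> Obj C" "Cod C m \<in> Obj C" using E ma dom_obj cod_obj by auto
  show ?thesis
  proof (rule cokI)
    show "m \<cdot> e \<in> Arr C" "k \<in> Arr C" "Dom C (m \<cdot> e) = Cod C k" using E ma m by auto
    have "(m \<cdot> e) \<cdot> k = m \<cdot> zero (Dom C k) (Cod C e)" by (rule assoc_rw') (use E ma m in simp_all)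
    then show "(m \<cdot> e) \<cdot> k = zero (Dom C k) (Cod C (m \<cdot> e))" using E ma m o by simp
  next
    fix u w assume u: "u \<in> Arr C" "w \<in> Arr C" "Dom C u = Cod C (m \<cdot> e)" "Dom C w = Cod C (m \<cdot> e)" "Cod C u = Cod C w"
      "u \<cdot> (m \<cdot> e) = w \<cdot> (m \<cdot> e)"
    have u': "Dom C u = Cod C m" "Dom C w = Cod C m" using u E ma m by auto
    have "(u \<cdot> m) \<cdot> e = u \<cdot> (m \<cdot> e)" using assoc[of e m u] u' u E ma m by simp
    also have "\<dots> = w \<cdot> (m \<cdot> e)" by (rule u(6))
    also have "\<dots> = (w \<cdot> m) \<cdot> e" using assoc[of e m w] u' u E ma m by simp
    finally have "u \<cdot> m = w \<cdot> m" using cok_epi[OF q, of "u \<cdot> m" "w \<cdot> m"] u' u ma m by simp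
    then show "u = w" using iso_epi[OF m(1), of u w] u' u by simp
  next
    fix g assume g: "g \<in> Arr C" "Dom C g = Cod C k" "g \<cdot> k = zero (Dom C k) (Cod C g)"
    obtain h1 where h1: "h1 \<in> Arr C" "Dom C h1 = Cod C e" "Cod C h1 = Cod C g" "h1 \<cdot> e = g"
      using cok_lift[OF q g] by blast
    have "(h1 \<cdot> i) \<cdot> (m \<cdot> e) = h1 \<cdot> (i \<cdot> (m \<cdot> e))" using assoc[of "m \<cdot> e" i h1] h1 i E ma m by simp
    also have "i \<cdot> (m \<cdot> e) = Idt C (Dom C m) \<cdot> e" by (rule assoc_rw) (use i E ma m in simp_all)
    finally have "(h1 \<cdot> i) \<cdot> (m \<cdot> e) = g" using h1 E m by simp
    then show "\<exists>h. h \<in> Arr C \<and> Dom C h = Cod C (m \<cdot> e) \<and> Cod C h = Cod C g \<and> h \<cdot> (m \<cdot> e) = g"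
      using h1 i E ma m by (intro exI[of _ "h1 \<cdot> i"]) simp
  qed
qed

end


context cat begin
lemma assoc_sq: "\<lbrakk>f \<in> Arr C; g \<in> Arr C; h \<in> Arr C; g' \<in> Arr C; h' \<in> Arr C; Cod C f = Dom C g; Cod C g = Dom C h;
   Cod C f = Dom C g'; Cod C g' = Dom C h'; h \<cdot> g = h' \<cdot> g'\<rbrakk> \<Longrightarrow> h \<cdot> (g \<cdot> f) = h' \<cdot> (g' \<cdot> f)"
  using assoc by metis
end

context hcat begin

lemma A3D: "is_A3_limit C qx qy L l1 l2 l3 \<Longrightarrow> qx \<in> Arr C \<and> qy \<in> Arr C \<and> Dom C qy = Dom C qx \<and>
  l1 \<in> Arr C \<and> l2 \<in> Arr C \<and> l3 \<in> Arr C \<and> Dom C l1 = L \<and> Dom C l2 = L \<and> Dom C l3 = L \<and>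
  Cod C l1 = Dom C qx \<and> Cod C l2 = Dom C qx \<and> Cod C l3 = Dom C qx \<and> qx \<cdot> l1 = qx \<cdot> l2 \<and> qy \<cdot> l2 = qy \<cdot> l3"
  unfolding is_A3_limit_def hom_def by auto

lemma A3_univ: "is_A3_limit C qx qy L l1 l2 l3 \<Longrightarrow> m1 \<in> hom C T (Dom C qx) \<Longrightarrow> m2 \<in> hom C T (Dom C qx) \<Longrightarrow>
   m3 \<in> hom C T (Dom C qx) \<Longrightarrow> qx \<cdot> m1 = qx \<cdot> m2 \<Longrightarrow> qy \<cdot> m2 = qy \<cdot> m3 \<Longrightarrow>
   \<exists>!h. h \<in> hom C T L \<and> l1 \<cdot> h = m1 \<and> l2 \<cdot> h = m2 \<and> l3 \<cdot> h = m3"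
  unfolding is_A3_limit_def by blast

lemma A3_lift: assumes "is_A3_limit C qx qy L l1 l2 l3" "m1 \<in> Arr C" "m2 \<in> Arr C" "m3 \<in> Arr C"
  "Dom C m2 = Dom C m1" "Dom C m3 = Dom C m1" "Cod C m1 = Dom C qx" "Cod C m2 = Dom C qx" "Cod C m3 = Dom C qx"
  "qx \<cdot> m1 = qx \<cdot> m2" "qy \<cdot> m2 = qy \<cdot> m3"
  shows "\<exists>h. h \<in> Arr C \<and> Dom C h = Dom C m1 \<and> Cod C h = L \<and> l1 \<cdot> h = m1 \<and> l2 \<cdot> h = m2 \<and> l3 \<cdot> h = m3"
proof -
  have "m1 \<in> hom C (Dom C m1) (Dom C qx)" "m2 \<in> hom C (Dom C m1) (Dom C qx)" "m3 \<in> hom C (Dom C m1) (Dom C qx)"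
    using assms homI by auto
  from A3_univ[OF assms(1) this assms(10,11)] obtain h where "h \<in> hom C (Dom C m1) L \<and> l1 \<cdot> h = m1 \<and> l2 \<cdot> h = m2 \<and> l3 \<cdot> h = m3"
    by blast
  then show ?thesis using homD by blast
qed

lemma A3_uniq: assumes L: "is_A3_limit C qx qy L l1 l2 l3" and h: "h \<in> Arr C" "h' \<in> Arr C" "Dom C h' = Dom C h"
  "Cod C h = L" "Cod C h' = L" and e: "l1 \<cdot> h = l1 \<cdot> h'" "l2 \<cdot> h = l2 \<cdot> h'" "l3 \<cdot> h = l3 \<cdot> h'"
  shows "h = h'"
proof -
  note D = A3D[OF L]
  have a: "qx \<cdot> (l1 \<cdot> h) = qx \<cdot> (l2 \<cdot> h)" by (rule assoc_sq) (use D h in simp_all)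
  have b: "qy \<cdot> (l2 \<cdot> h) = qy \<cdot> (l3 \<cdot> h)" by (rule assoc_sq) (use D h in simp_all)
  have hh: "l1 \<cdot> h \<in> hom C (Dom C h) (Dom C qx)" "l2 \<cdot> h \<in> hom C (Dom C h) (Dom C qx)" "l3 \<cdot> h \<in> hom C (Dom C h) (Dom C qx)"
    using D h homI by auto
  have u: "\<exists>!k. k \<in> hom C (Dom C h) L \<and> l1 \<cdot> k = l1 \<cdot> h \<and> l2 \<cdot> k = l2 \<cdot> h \<and> l3 \<cdot> k = l3 \<cdot> h"
    by (rule A3_univ[OF L hh a b])
  have "h \<in> hom C (Dom C h) L" "h' \<in> hom C (Dom C h) L" using h homI by auto
  then show ?thesis by (intro ex1_uniq[OF u]) (use e in auto)
qed

lemma img_ker: assumes ex: "regular_epi C ex" and mx: "mono C mx" "normal_mono C mx" and c: "Cod C ex = Dom C mx"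
  and q: "is_cokernel C qx (mx \<cdot> ex)"
  shows "is_kernel C mx qx"
proof -
  obtain a b where cq: "is_coequalizer C ex a b" using ex unfolding regular_epi_def by blast
  have E: "ex \<in> Arr C" using coeqD[OF cq] by blast
  have M: "mx \<in> Arr C" using mx unfolding mono_def by blast
  obtain f0 where f0: "is_kernel C mx f0" using mx unfolding normal_mono_def by blast
  have F0: "f0 \<in> Arr C" "Cod C mx = Dom C f0" "f0 \<cdot> mx = zero (Dom C mx) (Cod C f0)" using kerD[OF f0] by auto
  have Q: "qx \<in> Arr C" "Dom C qx = Cod C mx" "qx \<cdot> (mx \<cdot> ex) = zero (Dom C ex) (Cod C qx)"
    using cokD[OF q] E M c by auto
  have o: "Dom C mx \<in> Obj C" "Dom C ex \<in> Obj C" "Cod C qx \<in> Obj C" "Cod C f0 \<in> Obj C"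
    using M E Q F0 dom_obj cod_obj by auto
  show ?thesis
  proof (rule kerI)
    show "mx \<in> Arr C" "qx \<in> Arr C" "Cod C mx = Dom C qx" "mono C mx" using M Q mx by auto
    have "(qx \<cdot> mx) \<cdot> ex = qx \<cdot> (mx \<cdot> ex)" using assoc[of ex mx qx] E M Q c by simp
    also have "\<dots> = zero (Dom C mx) (Cod C qx) \<cdot> ex" using Q o E c by simp
    finally show "qx \<cdot> mx = zero (Dom C mx) (Cod C qx)"
      using coeq_epi[OF cq, of "qx \<cdot> mx" "zero (Dom C mx) (Cod C qx)"] M Q o c by simp
  next
    fix g assume g: "g \<in> Arr C" "Cod C g = Dom C qx" "qx \<cdot> g = zero (Dom C g) (Cod C qx)"
    have "f0 \<cdot> (mx \<cdot> ex) = (f0 \<cdot> mx) \<cdot> ex" using assoc[of ex mx f0] E M F0 c by simp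
    also have "\<dots> = zero (Dom C ex) (Cod C f0)" using F0 o E c by simp
    finally have "f0 \<cdot> (mx \<cdot> ex) = zero (Dom C (mx \<cdot> ex)) (Cod C f0)" using E M c by simp
    then obtain f' where f': "f' \<in> Arr C" "Dom C f' = Cod C qx" "Cod C f' = Cod C f0" "f' \<cdot> qx = f0"
      using cok_lift[OF q F0(1)] E M c F0 by auto
    have "f0 \<cdot> g = f' \<cdot> (qx \<cdot> g)" by (rule sym, rule assoc_rw) (use f' g Q in simp_all)
    also have "\<dots> = zero (Dom C g) (Cod C f0)" using g f' o g dom_obj by simp
    finally have "f0 \<cdot> g = zero (Dom C g) (Cod C f0)" .
    then show "\<exists>h. h \<in> Arr C \<and> Dom C h = Dom C g \<and> Cod C h = Dom C mx \<and> mx \<cdot> h = g"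
      using ker_lift[OF f0 g(1)] g F0 Q by simp
  qed
qed

end


context hcat begin

lemma main:
  assumes "x \<in> hom C X A" and "y \<in> hom C Y A"
    and "image_is_normal_mono C x" and "image_is_normal_mono C y"
    and "is_coproduct C A X AX iAX1 iAX2"
    and "cx \<in> hom C AX A" and "Comp C cx iAX1 = Idt C A" and "Comp C cx iAX2 = x"
    and "zx \<in> hom C AX A" and "Comp C zx iAX1 = Idt C A" and "zero_arr C (Comp C zx iAX2)"
    and "is_coproduct C A Y AY iAY1 iAY2"
    and "cy \<in> hom C AY A" and "Comp C cy iAY1 = Idt C A" and "Comp C cy iAY2 = y"
    and "zy \<in> hom C AY A" and "Comp C zy iAY1 = Idt C A" and "zero_arr C (Comp C zy iAY2)"
    and "is_pullback C zx zy pi1 pi2"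
    and "is_cokernel C qx x" and "is_cokernel C qy y"
    and "is_A3_limit C qx qy A3 l1 l2 l3"
    and "g \<in> hom C (Dom C pi1) A3"
    and "Comp C l1 g = Comp C cx pi1" and "Comp C l2 g = Comp C zx pi1"
    and "Comp C l3 g = Comp C cy pi2"
  shows "normal_epi C g"
proof -
  note a = assms
  have x: "x \<in> Arr C" "Dom C x = X" "Cod C x = A" using homD[OF a(1)] by auto
  have y: "y \<in> Arr C" "Dom C y = Y" "Cod C y = A" using homD[OF a(2)] by auto
  have Ao: "A \<in> Obj C" "X \<in> Obj C" "Y \<in> Obj C" using x y dom_obj cod_obj by auto
  have iX: "iAX1 \<in> Arr C" "Dom C iAX1 = A" "Cod C iAX1 = AX" "iAX2 \<in> Arr C" "Dom C iAX2 = X" "Cod C iAX2 = AX"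
    using a(5) unfolding is_coproduct_def hom_def by auto
  have iY: "iAY1 \<in> Arr C" "Dom C iAY1 = A" "Cod C iAY1 = AY" "iAY2 \<in> Arr C" "Dom C iAY2 = Y" "Cod C iAY2 = AY"
    using a(12) unfolding is_coproduct_def hom_def by auto
  have cxa: "cx \<in> Arr C" "Dom C cx = AX" "Cod C cx = A" using homD[OF a(6)] by auto
  have zxa: "zx \<in> Arr C" "Dom C zx = AX" "Cod C zx = A" using homD[OF a(9)] by auto
  have cya: "cy \<in> Arr C" "Dom C cy = AY" "Cod C cy = A" using homD[OF a(13)] by auto
  have zya: "zy \<in> Arr C" "Dom C zy = AY" "Cod C zy = A" using homD[OF a(16)] by auto
  have zx2: "zx \<cdot> iAX2 = zero X A" using a(11) zero_arr_iff[of "zx \<cdot> iAX2"] zxa iX by simp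
  have zy2: "zy \<cdot> iAY2 = zero Y A" using a(18) zero_arr_iff[of "zy \<cdot> iAY2"] zya iY by simp
  note P = a(19)
  have P': "pi1 \<in> Arr C" "pi2 \<in> Arr C" "Dom C pi2 = Dom C pi1" "Cod C pi1 = AX" "Cod C pi2 = AY" "zx \<cdot> pi1 = zy \<cdot> pi2"
    using pbD[OF P] zxa zya by auto
  define PP where "PP = Dom C pi1"
  have Qx: "qx \<in> Arr C" "Dom C qx = A" "qx \<cdot> x = zero X (Cod C qx)" using cokD[OF a(20)] x by auto
  have Qy: "qy \<in> Arr C" "Dom C qy = A" "qy \<cdot> y = zero Y (Cod C qy)" using cokD[OF a(21)] y by auto
  note L = a(22)
  have L': "l1 \<in> Arr C" "l2 \<in> Arr C" "l3 \<in> Arr C" "Dom C l1 = A3" "Dom C l2 = A3" "Dom C l3 = A3"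
    "Cod C l1 = A" "Cod C l2 = A" "Cod C l3 = A" "qx \<cdot> l1 = qx \<cdot> l2" "qy \<cdot> l2 = qy \<cdot> l3"
    using A3D[OF L] Qx by auto
  have A3o: "A3 \<in> Obj C" using L' dom_obj by blast
  have G: "g \<in> Arr C" "Dom C g = PP" "Cod C g = A3" using homD[OF a(23)] PP_def by auto
  have Qo: "Cod C qx \<in> Obj C" "Cod C qy \<in> Obj C" using Qx Qy cod_obj by auto
  obtain ex mx where IX: "regular_epi C ex" "mono C mx" "normal_mono C mx" "Cod C ex = Dom C mx" "x = mx \<cdot> ex"
    using a(3) unfolding image_is_normal_mono_def by blast
  obtain ey my where IY: "regular_epi C ey" "mono C my" "normal_mono C my" "Cod C ey = Dom C my" "y = my \<cdot> ey"
    using a(4) unfolding image_is_normal_mono_def by blast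
  obtain ax bx where cqx: "is_coequalizer C ex ax bx" using IX(1) unfolding regular_epi_def by blast
  obtain ay by' where cqy: "is_coequalizer C ey ay by'" using IY(1) unfolding regular_epi_def by blast
  have exa: "ex \<in> Arr C" "mx \<in> Arr C" using coeqD[OF cqx] IX(2) unfolding mono_def by auto
  have eya: "ey \<in> Arr C" "my \<in> Arr C" using coeqD[OF cqy] IY(2) unfolding mono_def by auto
  have exd: "Dom C ex = X" "Cod C mx = A" using x IX exa by auto
  have eyd: "Dom C ey = Y" "Cod C my = A" using y IY eya by auto
  define Kx where "Kx = Dom C mx"
  define Ky where "Ky = Dom C my"
  have Ko: "Kx \<in> Obj C" "Ky \<in> Obj C" using exa eya dom_obj Kx_def Ky_def by auto
  have kx: "is_kernel C mx qx" using img_ker[OF IX(1,2,3,4)] a(20) IX(5) by simp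
  have ky: "is_kernel C my qy" using img_ker[OF IY(1,2,3,4)] a(21) IY(5) by simp
  have qmx: "qx \<cdot> mx = zero Kx (Cod C qx)" using kerD[OF kx] Kx_def by simp
  have qmy: "qy \<cdot> my = zero Ky (Cod C qy)" using kerD[OF ky] Ky_def by simp
  obtain e m where EM: "regular_epi C e" "mono C m" "Cod C e = Dom C m" "g = m \<cdot> e" using factor[OF G(1)] by blast
  obtain ae be where cqe: "is_coequalizer C e ae be" using EM(1) unfolding regular_epi_def by blast
  have ema: "e \<in> Arr C" "m \<in> Arr C" using coeqD[OF cqe] EM(2) unfolding mono_def by auto
  have emd: "Dom C e = PP" "Cod C m = A3" using G EM ema by auto
  have gcomp: "g \<cdot> t = m \<cdot> (e \<cdot> t)" if "t \<in> Arr C" "Cod C t = PP" for t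
    using EM(4) assoc[of t e m] ema EM emd that by simp
  obtain \<delta> where \<delta>: "\<delta> \<in> Arr C" "Dom C \<delta> = A" "Cod C \<delta> = A3" "l1 \<cdot> \<delta> = Idt C A" "l2 \<cdot> \<delta> = Idt C A" "l3 \<cdot> \<delta> = Idt C A"
    using A3_lift[OF L, of "Idt C A" "Idt C A" "Idt C A"] Ao Qx by auto
  obtain d0 where d0: "d0 \<in> Arr C" "Dom C d0 = A" "Cod C d0 = PP" "pi1 \<cdot> d0 = iAX1" "pi2 \<cdot> d0 = iAY1"
    using pb_lift[OF P iX(1) iY(1)] iX iY zxa zya a(10,17) PP_def by auto
  have gd0: "g \<cdot> d0 = \<delta>"
  proof (rule A3_uniq[OF L])
    have "l1 \<cdot> (g \<cdot> d0) = cx \<cdot> (pi1 \<cdot> d0)" by (rule assoc_sq) (use L' G d0 cxa P' a(24) PP_def in simp_all)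
    then show "l1 \<cdot> (g \<cdot> d0) = l1 \<cdot> \<delta>" using d0 a(7) \<delta> by simp
    have "l2 \<cdot> (g \<cdot> d0) = zx \<cdot> (pi1 \<cdot> d0)" by (rule assoc_sq) (use L' G d0 zxa P' a(25) PP_def in simp_all)
    then show "l2 \<cdot> (g \<cdot> d0) = l2 \<cdot> \<delta>" using d0 a(10) \<delta> by simp
    have "l3 \<cdot> (g \<cdot> d0) = cy \<cdot> (pi2 \<cdot> d0)" by (rule assoc_sq) (use L' G d0 cya P' a(26) PP_def in simp_all)
    then show "l3 \<cdot> (g \<cdot> d0) = l3 \<cdot> \<delta>" using d0 a(14) \<delta> by simp
  qed (use G d0 \<delta> in simp_all)
  have md0: "m \<cdot> (e \<cdot> d0) = \<delta>" using gd0 gcomp[OF d0(1,3)] by simp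
  obtain jx where jx: "jx \<in> Arr C" "Dom C jx = Kx" "Cod C jx = A3" "l1 \<cdot> jx = mx" "l2 \<cdot> jx = zero Kx A" "l3 \<cdot> jx = zero Kx A"
    using A3_lift[OF L, of mx "zero Kx A" "zero Kx A"] exa exd Ko Ao Qx qmx Kx_def by auto
  obtain hx where hx: "hx \<in> Arr C" "Dom C hx = X" "Cod C hx = PP" "pi1 \<cdot> hx = iAX2" "pi2 \<cdot> hx = zero X AY"
  proof -
    have AYo: "AY \<in> Obj C" using iY cod_obj by blast
    have "zx \<cdot> iAX2 = zy \<cdot> zero X AY" using zx2 zya Ao AYo by simp
    then show ?thesis using that pb_lift[OF P iX(4), of "zero X AY"] iX zxa zya Ao AYo PP_def by auto
  qed
  have ghx: "g \<cdot> hx = jx \<cdot> ex"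
  proof (rule A3_uniq[OF L])
    have "l1 \<cdot> (g \<cdot> hx) = cx \<cdot> (pi1 \<cdot> hx)" by (rule assoc_sq) (use L' G hx cxa P' a(24) PP_def in simp_all)
    moreover have "l1 \<cdot> (jx \<cdot> ex) = mx \<cdot> ex" by (rule assoc_rw) (use L' jx exa exd IX Kx_def in simp_all)
    ultimately show "l1 \<cdot> (g \<cdot> hx) = l1 \<cdot> (jx \<cdot> ex)" using hx a(8) IX(5) by simp
    have "l2 \<cdot> (g \<cdot> hx) = zx \<cdot> (pi1 \<cdot> hx)" by (rule assoc_sq) (use L' G hx zxa P' a(25) PP_def in simp_all)
    moreover have "l2 \<cdot> (jx \<cdot> ex) = zero Kx A \<cdot> ex" by (rule assoc_rw) (use L' jx exa exd IX Kx_def in simp_all)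
    ultimately show "l2 \<cdot> (g \<cdot> hx) = l2 \<cdot> (jx \<cdot> ex)" using hx zx2 exa exd IX Kx_def Ao by simp
    have "l3 \<cdot> (g \<cdot> hx) = cy \<cdot> (pi2 \<cdot> hx)" by (rule assoc_sq) (use L' G hx cya P' a(26) PP_def in simp_all)
    moreover have "l3 \<cdot> (jx \<cdot> ex) = zero Kx A \<cdot> ex" by (rule assoc_rw) (use L' jx exa exd IX Kx_def in simp_all)
    ultimately show "l3 \<cdot> (g \<cdot> hx) = l3 \<cdot> (jx \<cdot> ex)" using hx cya iY cod_obj exa exd IX Kx_def Ao by simp
  qed (use G hx jx exa exd IX Kx_def in simp_all)
  have "m \<cdot> (e \<cdot> hx) = jx \<cdot> ex" using gcomp[OF hx(1,3)] ghx by simp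
  then have "\<exists>d. d \<in> Arr C \<and> Dom C d = Cod C ex \<and> Cod C d = Dom C m \<and> m \<cdot> d = jx"
    by (intro coeq_orth[OF cqx EM(2), of "e \<cdot> hx"]) (use ema emd EM(3) hx jx exa exd IX(4) Kx_def in simp_all)
  then obtain dx where dx: "dx \<in> Arr C" "Dom C dx = Kx" "Cod C dx = Dom C m" "m \<cdot> dx = jx"
    using IX(4) Kx_def by auto
  have jyc: "qy \<cdot> zero Ky A = qy \<cdot> my" using qmy Qy Ko Qo by simp
  have "\<exists>h. h \<in> Arr C \<and> Dom C h = Dom C (zero Ky A) \<and> Cod C h = A3 \<and> l1 \<cdot> h = zero Ky A \<and> l2 \<cdot> h = zero Ky A \<and> l3 \<cdot> h = my"
    by (rule A3_lift[OF L _ _ _ _ _ _ _ _ refl jyc]) (use eya eyd Ko Ao Qx Ky_def in simp_all)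
  then obtain jy where jy: "jy \<in> Arr C" "Dom C jy = Ky" "Cod C jy = A3" "l1 \<cdot> jy = zero Ky A" "l2 \<cdot> jy = zero Ky A" "l3 \<cdot> jy = my"
    using Ko Ao by auto
  obtain hy where hy: "hy \<in> Arr C" "Dom C hy = Y" "Cod C hy = PP" "pi1 \<cdot> hy = zero Y AX" "pi2 \<cdot> hy = iAY2"
  proof -
    have AXo: "AX \<in> Obj C" using iX cod_obj by blast
    have "zx \<cdot> zero Y AX = zy \<cdot> iAY2" using zy2 zxa Ao AXo by simp
    then show ?thesis using that pb_lift[OF P _ iY(4), of "zero Y AX"] iY zxa zya Ao AXo PP_def by auto
  qed
  have ghy: "g \<cdot> hy = jy \<cdot> ey"
  proof (rule A3_uniq[OF L])
    have "l1 \<cdot> (g \<cdot> hy) = cx \<cdot> (pi1 \<cdot> hy)" by (rule assoc_sq) (use L' G hy cxa P' a(24) PP_def in simp_all)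
    moreover have "l1 \<cdot> (jy \<cdot> ey) = zero Ky A \<cdot> ey" by (rule assoc_rw) (use L' jy eya eyd IY Ky_def in simp_all)
    ultimately show "l1 \<cdot> (g \<cdot> hy) = l1 \<cdot> (jy \<cdot> ey)" using hy cxa iX cod_obj eya eyd IY Ky_def Ao by simp
    have "l2 \<cdot> (g \<cdot> hy) = zx \<cdot> (pi1 \<cdot> hy)" by (rule assoc_sq) (use L' G hy zxa P' a(25) PP_def in simp_all)
    moreover have "l2 \<cdot> (jy \<cdot> ey) = zero Ky A \<cdot> ey" by (rule assoc_rw) (use L' jy eya eyd IY Ky_def in simp_all)
    ultimately show "l2 \<cdot> (g \<cdot> hy) = l2 \<cdot> (jy \<cdot> ey)" using hy zxa iX cod_obj eya eyd IY Ky_def Ao by simp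
    have "l3 \<cdot> (g \<cdot> hy) = cy \<cdot> (pi2 \<cdot> hy)" by (rule assoc_sq) (use L' G hy cya P' a(26) PP_def in simp_all)
    moreover have "l3 \<cdot> (jy \<cdot> ey) = my \<cdot> ey" by (rule assoc_rw) (use L' jy eya eyd IY Ky_def in simp_all)
    ultimately show "l3 \<cdot> (g \<cdot> hy) = l3 \<cdot> (jy \<cdot> ey)" using hy a(15) IY(5) by simp
  qed (use G hy jy eya eyd IY Ky_def in simp_all)
  have "m \<cdot> (e \<cdot> hy) = jy \<cdot> ey" using gcomp[OF hy(1,3)] ghy by simp
  then have "\<exists>d. d \<in> Arr C \<and> Dom C d = Cod C ey \<and> Cod C d = Dom C m \<and> m \<cdot> d = jy"
    by (intro coeq_orth[OF cqy EM(2), of "e \<cdot> hy"]) (use ema emd EM(3) hy jy eya eyd IY(4) Ky_def in simp_all)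
  then obtain dy where dy: "dy \<in> Arr C" "Dom C dy = Ky" "Cod C dy = Dom C m" "m \<cdot> dy = jy"
    using IY(4) Ky_def by auto
  obtain kk where kk: "is_kernel C kk l2" using ker_ex[OF L'(2) fcompl] by blast
  define K where "K = Dom C kk"
  have KK: "kk \<in> Arr C" "Cod C kk = A3" "l2 \<cdot> kk = zero K A" using kerD[OF kk] L' K_def by auto
  have Kob: "K \<in> Obj C" using KK dom_obj K_def by auto
  have "qx \<cdot> (l1 \<cdot> kk) = qx \<cdot> (l2 \<cdot> kk)" by (rule assoc_sq) (use L' KK Qx in simp_all)
  then have "qx \<cdot> (l1 \<cdot> kk) = zero (Dom C (l1 \<cdot> kk)) (Cod C qx)" using KK Qx L' Kob Qo K_def by simp
  then obtain ka where ka: "ka \<in> Arr C" "Dom C ka = K" "Cod C ka = Kx" "mx \<cdot> ka = l1 \<cdot> kk"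
    using ker_lift[OF kx, of "l1 \<cdot> kk"] L' KK Qx K_def Kx_def by auto
  have "qy \<cdot> (l3 \<cdot> kk) = qy \<cdot> (l2 \<cdot> kk)" by (rule assoc_sq) (use L' KK Qx Qy in simp_all)
  then have "qy \<cdot> (l3 \<cdot> kk) = zero (Dom C (l3 \<cdot> kk)) (Cod C qy)" using KK Qy L' Kob Qo K_def by simp
  then obtain kb0 where kb0: "kb0 \<in> Arr C" "Dom C kb0 = K" "Cod C kb0 = Ky" "my \<cdot> kb0 = l3 \<cdot> kk"
    using ker_lift[OF ky, of "l3 \<cdot> kk"] L' KK Qy K_def Ky_def by auto
  obtain c where c: "c \<in> Arr C" "Dom C c = Ky" "Cod C c = K" "kk \<cdot> c = jy"
    using ker_lift[OF kk jy(1)] jy L' KK K_def by auto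
  have bc: "kb0 \<cdot> c = Idt C Ky"
  proof (rule mono_cancel[OF IY(2)])
    have "my \<cdot> (kb0 \<cdot> c) = l3 \<cdot> (kk \<cdot> c)" by (rule assoc_sq) (use kb0 c eya L' KK eyd Ky_def K_def in simp_all)
    then show "my \<cdot> (kb0 \<cdot> c) = my \<cdot> Idt C Ky" using c jy eya Ky_def by simp
  qed (use kb0 c Ko Ky_def in simp_all)
  obtain kb where kb: "is_kernel C kb kb0" using ker_ex[OF kb0(1) fcompl] by blast
  define K' where "K' = Dom C kb"
  have KB: "kb \<in> Arr C" "Cod C kb = K" "kb0 \<cdot> kb = zero K' Ky" using kerD[OF kb] kb0 K'_def by auto
  have K'o: "K' \<in> Obj C" using KB dom_obj K'_def by auto
  have kkb: "kk \<cdot> kb = jx \<cdot> (ka \<cdot> kb)"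
  proof (rule A3_uniq[OF L])
    have "l1 \<cdot> (kk \<cdot> kb) = mx \<cdot> (ka \<cdot> kb)" by (rule assoc_sq) (use L' KK KB ka exa exd K_def Kx_def in simp_all)
    moreover have "l1 \<cdot> (jx \<cdot> (ka \<cdot> kb)) = mx \<cdot> (ka \<cdot> kb)" by (rule assoc_rw) (use L' jx KB ka Kx_def in simp_all)
    ultimately show "l1 \<cdot> (kk \<cdot> kb) = l1 \<cdot> (jx \<cdot> (ka \<cdot> kb))" by simp
    have "l2 \<cdot> (kk \<cdot> kb) = zero K A \<cdot> kb" by (rule assoc_rw) (use L' KK KB K_def in simp_all)
    moreover have "l2 \<cdot> (jx \<cdot> (ka \<cdot> kb)) = zero Kx A \<cdot> (ka \<cdot> kb)" by (rule assoc_rw) (use L' jx KB ka Kx_def in simp_all)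
    ultimately show "l2 \<cdot> (kk \<cdot> kb) = l2 \<cdot> (jx \<cdot> (ka \<cdot> kb))" using KB ka Ao K'_def by simp
    have "l3 \<cdot> (kk \<cdot> kb) = my \<cdot> (kb0 \<cdot> kb)" by (rule assoc_sq) (use L' KK KB kb0 eya eyd K_def Ky_def in simp_all)
    moreover have "l3 \<cdot> (jx \<cdot> (ka \<cdot> kb)) = zero Kx A \<cdot> (ka \<cdot> kb)" by (rule assoc_rw) (use L' jx KB ka Kx_def in simp_all)
    ultimately show "l3 \<cdot> (kk \<cdot> kb) = l3 \<cdot> (jx \<cdot> (ka \<cdot> kb))" using KB ka Ao K'_def K'o eya eyd Ky_def by simp
  qed (use KK KB jx ka K_def in simp_all)
  have kkb2: "kk \<cdot> kb = m \<cdot> (dx \<cdot> (ka \<cdot> kb))"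
    using kkb assoc[of "ka \<cdot> kb" dx m] dx ka KB ema K_def by simp
  obtain n1 n2 where N: "is_pullback C kk m n1 n2" using pb_ex[OF fcompl KK(1) ema(2)] KK emd by auto
  have N': "n1 \<in> Arr C" "n2 \<in> Arr C" "Dom C n2 = Dom C n1" "Cod C n1 = K" "Cod C n2 = Dom C m" "kk \<cdot> n1 = m \<cdot> n2"
    using pbD[OF N] K_def by auto
  have mn1: "mono C n1" using pb_mono[OF N EM(2)] .
  obtain c' where c': "c' \<in> Arr C" "Dom C c' = Ky" "Cod C c' = Dom C n1" "n1 \<cdot> c' = c"
    using pb_lift[OF N c(1) dy(1)] c dy jy KK K_def by auto
  obtain kb' where kb': "kb' \<in> Arr C" "Dom C kb' = K'" "Cod C kb' = Dom C n1" "n1 \<cdot> kb' = kb"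
    using pb_lift[OF N KB(1), of "dx \<cdot> (ka \<cdot> kb)"] kkb2 dx ka KB K_def K'_def by auto
  have in1: "iso C n1"
    by (rule split_iso[OF kb0(1) c(1) _ _ _ kb mn1 _ c'(1) _ _ c'(4) kb'(1) _ _ kb'(4)])
       (use kb0 c bc N' c' kb' K'_def in simp_all)
  obtain i where i: "i \<in> Arr C" "Dom C i = K" "Cod C i = Dom C n1" "n1 \<cdot> i = Idt C K"
    using iso_inv[OF in1] N' by metis
  have kkm: "kk = m \<cdot> (n2 \<cdot> i)"
  proof -
    have "kk = kk \<cdot> (n1 \<cdot> i)" using i KK K_def by simp
    also have "\<dots> = m \<cdot> (n2 \<cdot> i)" by (rule assoc_sq) (use i N' KK ema K_def in simp_all)
    finally show ?thesis .
  qed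
  have im: "iso C m"
    by (rule split_iso[OF L'(2) \<delta>(1) _ _ _ kk EM(2) _ _ _ _ md0 _ _ _ kkm[symmetric]])
       (use L' \<delta> ema emd EM(3) d0 i N' K_def in simp_all)
  obtain k0 where k0: "is_cokernel C e k0" using reg_normal[OF EM(1)] unfolding normal_epi_def by blast
  have "is_cokernel C (m \<cdot> e) k0" by (rule iso_cok[OF k0 im]) (use EM in simp)
  then show ?thesis unfolding normal_epi_def EM(4) by blast
qed

end

theorem theorem1p6:
  fixes C :: "('o, 'm) category_data"
  assumes "homological C" and "finitely_cocomplete C"
    and "x \<in> hom C X A" and "y \<in> hom C Y A"
    and "image_is_normal_mono C x" and "image_is_normal_mono C y"
    \<comment> \<open>A + X with injections, and the copairings [1,x] and [1,0]\<close>
    and "is_coproduct C A X AX iAX1 iAX2"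
    and "cx \<in> hom C AX A" and "Comp C cx iAX1 = Idt C A" and "Comp C cx iAX2 = x"
    and "zx \<in> hom C AX A" and "Comp C zx iAX1 = Idt C A" and "zero_arr C (Comp C zx iAX2)"
    \<comment> \<open>A + Y with injections, and the copairings [1,y] and [1,0]\<close>
    and "is_coproduct C A Y AY iAY1 iAY2"
    and "cy \<in> hom C AY A" and "Comp C cy iAY1 = Idt C A" and "Comp C cy iAY2 = y"
    and "zy \<in> hom C AY A" and "Comp C zy iAY1 = Idt C A" and "zero_arr C (Comp C zy iAY2)"
    \<comment> \<open>(A+X) \<times>_A (A+Y) with projections pi1, pi2\<close>
    and "is_pullback C zx zy pi1 pi2"
    \<comment> \<open>cokernels of x and y, and the limit A_3\<close>
    and "is_cokernel C qx x" and "is_cokernel C qy y"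
    and "is_A3_limit C qx qy A3 l1 l2 l3"
    \<comment> \<open>gamma_1 = <[1,x] pi1, [1,0] pi1, [1,y] pi2>\<close>
    and "g \<in> hom C (Dom C pi1) A3"
    and "Comp C l1 g = Comp C cx pi1" and "Comp C l2 g = Comp C zx pi1"
    and "Comp C l3 g = Comp C cy pi2"
  shows "normal_epi C g"
proof -
  obtain z where z: "zero_obj C z" using assms(1) unfolding homological_def pointed_def by blast
  have cC: "category C" using assms(1) unfolding homological_def regular_category_def by blast
  interpret hcat C z
  proof (unfold_locales)
    show "category C" by (rule cC)
    show "zero_obj C z" by (rule z)
    show "homological C" by (rule assms(1))
    show "finitely_cocomplete C" by (rule assms(2))
  qed
  show ?thesis by (rule main[OF assms(3-28)])
qed

end
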